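(* Let $n\geq 1$ and $0\leq k\leq n-1$ be integers such that $n$ divides $k^2+k+1$. Let $C$ be the $n\times n$ permutation matrix of a cyclic permutation of order $n$, and let $$N=\begin{bmatrix}I & I & I & 0\\ I & C & 0 & I\\ I & 0 & C^{k+1} & C^k\\ 0 & I & C^k & C^k\end{bmatrix}.$$ Then the bipartite graph $\Gamma$ on $8n$ vertices with adjacency matrix $\begin{bmatrix}0 & N\\ N^{\top} & 0\end{bmatrix}$ is arc-transitive, and $1$ and $-1$ are eigenvalues of $\Gamma$, each with multiplicity three.
   Context: A graph is arc-transitive if its automorphism group acts transitively on the ordered pairs of adjacent vertices. Here $I$ and $0$ denote the $n\times n$ identity and zero matrices. *)

theory Defs
  imports "Jordan_Normal_Form.Char_Poly"
begin

definition is_graph_aut :: "nat \<Rightarrow> (nat \<Rightarrow> nat \<Rightarrow> bool) \<Rightarrow> (nat \<Rightarrow> nat) \<Rightarrow> bool" where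
  "is_graph_aut m E f \<longleftrightarrow> bij_betw f {..<m} {..<m} \<and>
     (\<forall>u<m. \<forall>v<m. E u v \<longleftrightarrow> E (f u) (f v))"

definition arc_transitive :: "nat \<Rightarrow> (nat \<Rightarrow> nat \<Rightarrow> bool) \<Rightarrow> bool" where
  "arc_transitive m E \<longleftrightarrow>
     (\<forall>u v x y. u < m \<and> v < m \<and> x < m \<and> y < m \<and> E u v \<and> E x y \<longrightarrow>
        (\<exists>f. is_graph_aut m E f \<and> f u = x \<and> f v = y))"

definition mat_graph :: "real mat \<Rightarrow> nat \<Rightarrow> nat \<Rightarrow> bool" where
  "mat_graph A u v \<longleftrightarrow> A $$ (u, v) \<noteq> 0"

definition is_ncycle :: "nat \<Rightarrow> (nat \<Rightarrow> nat) \<Rightarrow> bool" where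
  "is_ncycle n \<sigma> \<longleftrightarrow> bij_betw \<sigma> {..<n} {..<n} \<and>
     (\<forall>i<n. \<forall>j<n. \<exists>m. (\<sigma> ^^ m) i = j)"

definition perm_mat :: "nat \<Rightarrow> (nat \<Rightarrow> nat) \<Rightarrow> real mat" where
  "perm_mat n \<sigma> = mat n n (\<lambda>(i, j). if \<sigma> i = j then 1 else 0)"

definition N_mat :: "nat \<Rightarrow> real mat \<Rightarrow> nat \<Rightarrow> real mat" where
  "N_mat n C k = (let I = 1\<^sub>m n; Z = 0\<^sub>m n n in
     four_block_mat
       (four_block_mat I I I C) (four_block_mat I Z Z I)
       (four_block_mat I Z Z I) (four_block_mat (C ^\<^sub>m (k+1)) (C ^\<^sub>m k) (C ^\<^sub>m k) (C ^\<^sub>m k)))"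

definition bip_adj :: "nat \<Rightarrow> real mat \<Rightarrow> real mat" where
  "bip_adj n N = four_block_mat (0\<^sub>m (4*n) (4*n)) N (transpose_mat N) (0\<^sub>m (4*n) (4*n))"

end

theory Submission
  imports Defs "Jordan_Normal_Form.Jordan_Normal_Form_Uniqueness" "Jordan_Normal_Form.Jordan_Normal_Form_Existence"
begin

hide_const (open) Coset.order

lemma perm_mat_carrier[simp]: "perm_mat n \<sigma> \<in> carrier_mat n n"
  unfolding perm_mat_def by simp

lemma perm_mat_dims[simp]: "dim_row (perm_mat n \<sigma>) = n" "dim_col (perm_mat n \<sigma>) = n"
  unfolding perm_mat_def by simp_all

lemma perm_mat_index: "i < n \<Longrightarrow> j < n \<Longrightarrow> perm_mat n \<sigma> $$ (i,j) = (if \<sigma> i = j then 1 else 0)"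
  unfolding perm_mat_def by simp

lemma funpow_into: assumes "\<And>i. i < n \<Longrightarrow> \<sigma> i < n" shows "i < n \<Longrightarrow> (\<sigma> ^^ p) i < n"
  by (induct p) (auto simp: assms)

lemma sum_single_nat: "(j::nat) < n \<Longrightarrow> (\<Sum>l<n. (if l = j then a else 0) * f l) = (a * f j :: real)"
proof -
  assume "j < n"
  have "(\<Sum>l<n. (if l = j then a else 0) * f l) = (\<Sum>l\<in>{..<n}. if l = j then a * f l else 0)"
    by (rule sum.cong) auto
  also have "\<dots> = a * f j" using \<open>j < n\<close> by (subst sum.delta) simp_all
  finally show ?thesis .
qed

lemma perm_mat_pow: assumes into: "\<And>i. i < n \<Longrightarrow> \<sigma> i < n"
  shows "perm_mat n \<sigma> ^\<^sub>m p = perm_mat n (\<sigma> ^^ p)"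
proof (induct p)
  case 0
  show ?case by (rule eq_matI) (auto simp: perm_mat_index)
next
  case (Suc p)
  show ?case
  proof (rule eq_matI)
    fix i j assume i: "i < dim_row (perm_mat n (\<sigma> ^^ Suc p))" and j: "j < dim_col (perm_mat n (\<sigma> ^^ Suc p))"
    hence i: "i < n" and j: "j < n" by auto
    have pi: "(\<sigma> ^^ p) i < n" using funpow_into[OF into i] .
    have "(perm_mat n \<sigma> ^\<^sub>m Suc p) $$ (i,j) = row (perm_mat n (\<sigma> ^^ p)) i \<bullet> col (perm_mat n \<sigma>) j"
      using i j Suc by simp
    also have "\<dots> = (\<Sum>l<n. (if l = (\<sigma> ^^ p) i then 1 else 0) * (if \<sigma> l = j then 1 else 0))"
      unfolding scalar_prod_def using i j
      by (auto simp: perm_mat_index lessThan_atLeast0 intro!: sum.cong)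
    also have "\<dots> = (if \<sigma> ((\<sigma> ^^ p) i) = j then 1 else 0)"
      by (subst sum_single_nat[OF pi]) simp
    also have "\<dots> = perm_mat n (\<sigma> ^^ Suc p) $$ (i,j)" using i j by (simp add: perm_mat_index)
    finally show "(perm_mat n \<sigma> ^\<^sub>m Suc p) $$ (i,j) = perm_mat n (\<sigma> ^^ Suc p) $$ (i,j)" .
  qed auto
qed

definition vol :: "nat \<Rightarrow> nat \<Rightarrow> nat \<Rightarrow> nat" where
  "vol k a b = (if a = 1 \<and> b = 1 then 1 else if a = 2 \<and> b = 2 then k + 1
     else if a = 2 \<and> b = 3 then k else if a = 3 \<and> b = 2 then k else if a = 3 \<and> b = 3 then k else 0)"

lemma N_index:
  assumes into: "\<And>i. i < n \<Longrightarrow> \<sigma> i < n" and a: "a < 4" and b: "b < 4" and r: "r < n" and s: "s < n"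
  shows "N_mat n (perm_mat n \<sigma>) k $$ (a*n+r, b*n+s) = (if a + b \<noteq> 3 \<and> (\<sigma> ^^ vol k a b) r = s then 1 else 0)"
proof -
  have C: "\<And>p. perm_mat n \<sigma> ^\<^sub>m p = perm_mat n (\<sigma> ^^ p)" by (rule perm_mat_pow[OF into])
  have "a = 0 \<or> a = 1 \<or> a = 2 \<or> a = 3" using a by auto
  moreover have "b = 0 \<or> b = 1 \<or> b = 2 \<or> b = 3" using b by auto
  ultimately show ?thesis using r s
    unfolding N_mat_def Let_def C
    by (auto simp: perm_mat_index vol_def)
qed

lemma N_dims[simp]: "dim_row (N_mat n (perm_mat n \<sigma>) k) = 4*n" "dim_col (N_mat n (perm_mat n \<sigma>) k) = 4*n"
  unfolding N_mat_def Let_def by simp_all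

definition Rel :: "(nat \<Rightarrow> nat) \<Rightarrow> nat \<Rightarrow> nat \<Rightarrow> nat \<Rightarrow> nat \<Rightarrow> nat \<Rightarrow> bool" where
  "Rel \<sigma> k s r t q = ((s < 4 \<and> 4 \<le> t \<and> t < 8 \<and> s + (t-4) \<noteq> 3 \<and> (\<sigma> ^^ vol k s (t-4)) r = q) \<or>
       (t < 4 \<and> 4 \<le> s \<and> s < 8 \<and> t + (s-4) \<noteq> 3 \<and> (\<sigma> ^^ vol k t (s-4)) q = r))"

lemma blk_less: "(r::nat) < n \<Longrightarrow> (s*n + r < m*n) = (s < m)"
proof
  assume r: "r < n" and "s*n + r < m*n"
  hence "s*n < m*n" by linarith
  thus "s < m" by (simp add: mult_less_cancel2)
next
  assume r: "r < n" and "s < m"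
  hence "Suc s * n \<le> m * n" by (intro mult_le_mono1) simp
  thus "s*n + r < m*n" using r by simp
qed

lemma blk_minus: "m \<le> (s::nat) \<Longrightarrow> s*n + r - m*n = (s-m)*n + r"
  by (simp add: diff_mult_distrib)

lemma A_index:
  assumes into: "\<And>i. i < n \<Longrightarrow> \<sigma> i < n" and s: "s < 8" and t: "t < 8" and r: "r < n" and q: "q < n"
  shows "bip_adj n (N_mat n (perm_mat n \<sigma>) k) $$ (s*n+r, t*n+q) = (if Rel \<sigma> k s r t q then 1 else 0)"
proof -
  let ?N = "N_mat n (perm_mat n \<sigma>) k"
  have u8: "s*n + r < 4*n + 4*n" and w8: "t*n+q < 4*n + 4*n" using blk_less[OF r, of s 8] blk_less[OF q, of t 8] s t by auto
  have us: "(s*n + r < 4*n) = (s < 4)" by (rule blk_less[OF r])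
  have wt: "(t*n + q < 4*n) = (t < 4)" by (rule blk_less[OF q])
  have s4: "(s-4)*n + r < 4*n" using blk_less[OF r, of "s-4" 4] s by auto
  have t4: "(t-4)*n + q < 4*n" using blk_less[OF q, of "t-4" 4] t by auto
  have e: "bip_adj n ?N $$ (s*n+r, t*n+q) = (if s < 4 then if t < 4 then 0 else ?N $$ (s*n+r, (t-4)*n+q)
       else if t < 4 then ?N $$ (t*n+q, (s-4)*n+r) else 0)"
    unfolding bip_adj_def using u8 w8 us wt s4 t4
    by (auto simp: blk_minus)
  show ?thesis unfolding e Rel_def using s t r q
    by (auto simp: N_index[OF into])
qed


lemma ncycle_into: "is_ncycle n \<sigma> \<Longrightarrow> i < n \<Longrightarrow> \<sigma> i < n"
  unfolding is_ncycle_def bij_betw_def by auto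

lemma funpow_inj_on: assumes "inj_on \<sigma> S" "\<sigma> ` S \<subseteq> S" shows "inj_on (\<sigma> ^^ a) S"
proof (induct a)
  case 0 thus ?case by simp
next
  case (Suc a)
  have "(\<sigma> ^^ a) ` S \<subseteq> S" by (induct a) (use assms(2) in auto)
  hence "inj_on (\<sigma> \<circ> (\<sigma> ^^ a)) S" using Suc assms(1) by (intro comp_inj_on) (auto intro: inj_on_subset)
  thus ?case by (metis funpow.simps(2))
qed

lemma funpow_mod_period: assumes "(\<sigma> ^^ p) x = x" shows "(\<sigma> ^^ m) x = (\<sigma> ^^ (m mod p)) x"
proof -
  have q: "(\<sigma> ^^ (p*q)) x = x" for q
  proof (induct q)
    case (Suc q)
    have "(\<sigma> ^^ (p * Suc q)) x = (\<sigma> ^^ p) ((\<sigma> ^^ (p*q)) x)" by (simp add: funpow_add)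
    thus ?case using Suc assms by simp
  qed simp
  have "m = m mod p + p * (m div p)" by simp
  hence "(\<sigma> ^^ m) x = (\<sigma> ^^ (m mod p)) ((\<sigma> ^^ (p * (m div p))) x)"
    by (metis funpow_add o_apply)
  thus ?thesis using q by simp
qed

locale cyc =
  fixes n :: nat and \<sigma> :: "nat \<Rightarrow> nat"
  assumes cyc: "is_ncycle n \<sigma>" and n1: "n \<ge> 1"
begin

definition pi :: "nat \<Rightarrow> nat" where "pi i = (\<sigma> ^^ i) 0"

lemma into: "i < n \<Longrightarrow> \<sigma> i < n" using ncycle_into[OF cyc] .

lemma pi_into: "pi i < n" unfolding pi_def using funpow_into[OF into, where i=0] n1 by auto

lemma inj_pow: "inj_on (\<sigma> ^^ a) {..<n}"
  using cyc unfolding is_ncycle_def bij_betw_def by (intro funpow_inj_on) auto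

lemma no_short: assumes p: "0 < p" "p < n" and e: "(\<sigma> ^^ p) 0 = 0" shows False
proof -
  have "{..<n} \<subseteq> pi ` {..<p}"
  proof
    fix j assume "j \<in> {..<n}"
    then obtain m where "(\<sigma> ^^ m) 0 = j" using cyc n1 unfolding is_ncycle_def by auto
    hence "j = pi (m mod p)" using funpow_mod_period[OF e, of m] unfolding pi_def by simp
    thus "j \<in> pi ` {..<p}" using p by auto
  qed
  hence "card {..<n} \<le> card (pi ` {..<p})" by (intro card_mono) auto
  also have "\<dots> \<le> p" using card_image_le[of "{..<p}" pi] by simp
  finally show False using p by simp
qed

lemma pi_inj: "inj_on pi {..<n}"
proof (rule inj_onI)
  fix a b assume a: "a \<in> {..<n}" and b: "b \<in> {..<n}" and e: "pi a = pi b"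
  show "a = b"
  proof (rule ccontr)
    assume ne: "a \<noteq> b"
    { fix a b assume a: "a < n" and b: "b < n" and ab: "a < b" and e: "pi a = pi b"
      have "(\<sigma> ^^ a) ((\<sigma> ^^ (b - a)) 0) = (\<sigma> ^^ a) 0"
        using e ab unfolding pi_def by (metis funpow_add le_add_diff_inverse less_imp_le o_apply)
      moreover have "(\<sigma> ^^ (b - a)) 0 < n" using funpow_into[OF into, where i=0] n1 by auto
      ultimately have "(\<sigma> ^^ (b - a)) 0 = 0" using inj_pow[of a] n1 by (auto dest: inj_onD)
      moreover have "b - a < n" "0 < b - a" using b ab by linarith+
      ultimately have False using no_short[of "b - a"] by blast }
    thus False using a b e ne by (cases "a < b") (auto, metis linorder_neqE_nat)
  qed
qed

lemma pi_bij: "bij_betw pi {..<n} {..<n}"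
proof -
  have "pi ` {..<n} \<subseteq> {..<n}" using pi_into by auto
  moreover have "card (pi ` {..<n}) = n" using card_image[OF pi_inj] by simp
  ultimately have "pi ` {..<n} = {..<n}" by (intro card_subset_eq) auto
  thus ?thesis using pi_inj unfolding bij_betw_def by simp
qed

lemma pow_n: "(\<sigma> ^^ n) 0 = 0"
proof -
  have "(\<sigma> ^^ n) 0 \<in> pi ` {..<n}" using pi_bij funpow_into[OF into, where i=0 and p=n] n1 unfolding bij_betw_def by auto
  then obtain j where j: "j < n" "(\<sigma> ^^ n) 0 = (\<sigma> ^^ j) 0" unfolding pi_def by auto
  have "(\<sigma> ^^ j) ((\<sigma> ^^ (n - j)) 0) = (\<sigma> ^^ j) 0"
    using j by (metis funpow_add le_add_diff_inverse less_imp_le o_apply)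
  moreover have "(\<sigma> ^^ (n - j)) 0 < n" using funpow_into[OF into, where i=0] n1 by auto
  ultimately have e: "(\<sigma> ^^ (n - j)) 0 = 0" using inj_pow[of j] n1 by (auto dest: inj_onD)
  show ?thesis
  proof (cases "j = 0")
    case True thus ?thesis using j by simp
  next
    case False thus ?thesis using no_short[of "n - j"] e j by auto
  qed
qed

lemma pow_pi: "(\<sigma> ^^ p) (pi i) = pi ((i + p) mod n)"
proof -
  have "(\<sigma> ^^ p) (pi i) = (\<sigma> ^^ (i + p)) 0" unfolding pi_def by (metis add.commute comp_apply funpow_add)
  also have "\<dots> = (\<sigma> ^^ ((i+p) mod n)) 0" by (rule funpow_mod_period[OF pow_n])
  finally show ?thesis unfolding pi_def .
qed

definition phi :: "nat \<Rightarrow> nat" where "phi = the_inv_into {..<n} pi"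

lemma phi_bij: "bij_betw phi {..<n} {..<n}"
  unfolding phi_def by (rule bij_betw_the_inv_into[OF pi_bij])

lemma pi_phi: "r < n \<Longrightarrow> pi (phi r) = r"
  unfolding phi_def using pi_bij by (simp add: bij_betw_def f_the_inv_into_f)

lemma phi_into: "r < n \<Longrightarrow> phi r < n" using phi_bij unfolding bij_betw_def by auto

lemma pow_eq_iff: assumes r: "r < n" and q: "q < n"
  shows "((\<sigma> ^^ p) r = q) = ((phi r + p) mod n = phi q)"
proof -
  have "(\<sigma> ^^ p) r = pi ((phi r + p) mod n)" using pow_pi[of p "phi r"] pi_phi[OF r] by simp
  moreover have "q = pi (phi q)" using pi_phi[OF q] by simp
  moreover have "(phi r + p) mod n < n" "phi q < n" using n1 phi_into[OF q] by auto
  ultimately show ?thesis using pi_inj by (auto dest: inj_onD)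
qed

end


definition cadj :: "nat \<Rightarrow> nat \<Rightarrow> bool" where
  "cadj s t = ((s < 4 \<and> 4 \<le> t \<and> t < 8 \<and> s + (t-4) \<noteq> 3) \<or> (t < 4 \<and> 4 \<le> s \<and> s < 8 \<and> t + (s-4) \<noteq> 3))"

definition V :: "nat \<Rightarrow> nat \<Rightarrow> nat \<Rightarrow> int" where
  "V k s t = (if s < 4 then int (vol k s (t-4)) else - int (vol k t (s-4)))"

definition Gst :: "nat \<Rightarrow> nat \<Rightarrow> nat \<Rightarrow> nat \<Rightarrow> bool" where
  "Gst n k u w = (cadj (u div n) (w div n) \<and> int n dvd (int (u mod n) + V k (u div n) (w div n) - int (w mod n)))"

definition lift :: "nat \<Rightarrow> (nat \<Rightarrow> nat) \<Rightarrow> int \<Rightarrow> (nat \<Rightarrow> int) \<Rightarrow> nat \<Rightarrow> nat" where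
  "lift n g r c u = g (u div n) * n + nat ((r * int (u mod n) + c (u div n)) mod int n)"

lemma mod_minus_dvd: "(m::int) dvd (a mod m - a)"
proof -
  have "a mod m - a = - (m * (a div m))" by (simp add: minus_div_mult_eq_mod [symmetric])
  thus ?thesis by simp
qed

lemma div_mod_blk: assumes "(p::nat) < n" shows "(g * n + p) div n = g" "(g * n + p) mod n = p"
  using assms by auto

lemma dvd_small_eq: assumes "0 \<le> (a::int)" "a < m" "0 \<le> b" "b < m" "m dvd a - b" shows "a = b"
proof -
  have "a mod m = b mod m" using assms(5) by (simp add: mod_eq_dvd_iff)
  thus ?thesis using assms by simp
qed

lemma dvd_diff_iff: "(m::int) dvd (x - y) \<Longrightarrow> (m dvd x) = (m dvd y)"
  by (metis diff_add_cancel dvd_add_right_iff)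

lemma lift_aut:
  assumes n: "n \<ge> 1" and gi: "\<forall>s<8. g s < 8" and ginj: "inj_on g {..<8}"
    and cop: "coprime (int n) r"
    and ca: "\<forall>s<8. \<forall>t<8. cadj s t = cadj (g s) (g t)"
    and cond: "\<forall>s<8. \<forall>t<8. cadj s t \<longrightarrow> int n dvd (r * V k s t + c t - c s - V k (g s) (g t))"
  shows "is_graph_aut (8*n) (Gst n k) (lift n g r c)"
proof -
  define pos where "pos u = (r * int (u mod n) + c (u div n)) mod int n" for u
  have pos: "0 \<le> pos u" "pos u < int n" for u unfolding pos_def using n by auto
  have posn: "nat (pos u) < n" for u using pos[of u] by linarith
  have lf: "lift n g r c u = g (u div n) * n + nat (pos u)" for u unfolding lift_def pos_def ..
  have ldiv: "lift n g r c u div n = g (u div n)" and lmod: "lift n g r c u mod n = nat (pos u)" for u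
    unfolding lf using div_mod_blk[OF posn] by auto
  have pd: "int n dvd (pos u - (r * int (u mod n) + c (u div n)))" for u unfolding pos_def by (rule mod_minus_dvd)
  have udiv: "u < 8*n \<Longrightarrow> u div n < 8" for u using n by (simp add: less_mult_imp_div_less mult.commute)
  have into: "lift n g r c u < 8*n" if u: "u < 8*n" for u
  proof -
    have "g (u div n) \<le> 7" using gi udiv[OF u] by auto
    hence "g (u div n) * n \<le> 7 * n" by simp
    thus ?thesis unfolding lf using posn[of u] by linarith
  qed
  have inj: "inj_on (lift n g r c) {..<8*n}"
  proof (rule inj_onI)
    fix u w assume u: "u \<in> {..<8*n}" and w: "w \<in> {..<8*n}" and e: "lift n g r c u = lift n g r c w"
    have "g (u div n) = g (w div n)" using e ldiv by metis
    hence s: "u div n = w div n" using ginj udiv u w by (auto dest: inj_onD)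
    have "pos u = pos w" using e lmod pos by (metis nat_eq_iff2)
    hence "r * (int (u mod n) - int (w mod n)) = (pos w - (r * int (w mod n) + c (w div n))) - (pos u - (r * int (u mod n) + c (u div n)))"
      using s by (simp add: algebra_simps)
    hence "int n dvd r * (int (u mod n) - int (w mod n))"
      using pd[of u] pd[of w] by (metis dvd_diff)
    hence "int n dvd (int (u mod n) - int (w mod n))" using cop by (simp add: coprime_dvd_mult_right_iff coprime_dvd_mult_left_iff)
    hence "int (u mod n) = int (w mod n)" using dvd_small_eq[of "int (u mod n)" "int n" "int (w mod n)"] n by auto
    hence "u mod n = w mod n" by simp
    thus "u = w" using s by (metis div_mult_mod_eq)
  qed
  have bij: "bij_betw (lift n g r c) {..<8*n} {..<8*n}"
    unfolding bij_betw_def using inj endo_inj_surj[of "{..<8*n}" "lift n g r c"] into by auto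
  have edge: "Gst n k u w = Gst n k (lift n g r c u) (lift n g r c w)" if u: "u < 8*n" and w: "w < 8*n" for u w
  proof -
    let ?s = "u div n" and ?t = "w div n" and ?i = "int (u mod n)" and ?j = "int (w mod n)"
    show ?thesis
    proof (cases "cadj ?s ?t")
      case False thus ?thesis unfolding Gst_def ldiv using ca udiv[OF u] udiv[OF w] by auto
    next
      case True
      have cadj': "cadj (g ?s) (g ?t)" using True ca udiv[OF u] udiv[OF w] by auto
      have D: "int n dvd (r * V k ?s ?t + c ?t - c ?s - V k (g ?s) (g ?t))" using cond True udiv[OF u] udiv[OF w] by auto
      have dd: "(pos u + V k (g ?s) (g ?t) - pos w) - r * (?i + V k ?s ?t - ?j) =
         (pos u - (r * ?i + c ?s)) - (pos w - (r * ?j + c ?t))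
         - (r * V k ?s ?t + c ?t - c ?s - V k (g ?s) (g ?t))" by (simp add: algebra_simps)
      have "int n dvd ((pos u + V k (g ?s) (g ?t) - pos w) - r * (?i + V k ?s ?t - ?j))"
        unfolding dd by (rule dvd_diff[OF dvd_diff[OF pd[of u] pd[of w]] D])
      hence "(int n dvd (pos u + V k (g ?s) (g ?t) - pos w)) = (int n dvd (r * (?i + V k ?s ?t - ?j)))"
        by (rule dvd_diff_iff)
      also have "\<dots> = (int n dvd (?i + V k ?s ?t - ?j))" using cop
        by (simp add: coprime_dvd_mult_right_iff coprime_dvd_mult_left_iff)
      finally show ?thesis unfolding Gst_def ldiv lmod using True cadj' pos by simp
    qed
  qed
  show ?thesis unfolding is_graph_aut_def using bij edge by auto
qed


lemma all8: "(\<forall>s<(8::nat). P s) = (P 0 \<and> P 1 \<and> P 2 \<and> P 3 \<and> P 4 \<and> P 5 \<and> P 6 \<and> P 7)"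
proof
  assume "P 0 \<and> P 1 \<and> P 2 \<and> P 3 \<and> P 4 \<and> P 5 \<and> P 6 \<and> P 7"
  thus "\<forall>s<8. P s" by (auto simp: less_Suc_eq numeral_eq_Suc)
qed simp

lemma coprime_k: assumes h: "int n dvd int k^2 + int k + 1" shows "coprime (int n) (int k)"
proof (rule coprimeI)
  fix d assume "d dvd int n" "d dvd int k"
  hence "d dvd int k^2 + int k + 1" "d dvd int k * (int k + 1)" using h dvd_trans by (auto simp: dvd_mult2)
  hence "d dvd (int k^2 + int k + 1) - int k * (int k + 1)" by (rule dvd_diff)
  thus "is_unit d" by (simp add: algebra_simps power2_eq_square)
qed

lemma rho_aut: assumes n: "n \<ge> 1" and h: "int n dvd int k^2 + int k + 1"
  shows "is_graph_aut (8*n) (Gst n k) (lift n ((!) [0,3,1,2,5,6,4,7::nat]) (int k) ((!) [0,0,-1,-1-int k,0,0,0,int k]))"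
proof (rule lift_aut[OF n])
  show "coprime (int n) (int k)" by (rule coprime_k[OF h])
  show "\<forall>s<8. [0,3,1,2,5,6,4,7::nat] ! s < 8" unfolding all8 by simp
  show "inj_on ((!) [0,3,1,2,5,6,4,7::nat]) {..<8::nat}" by (rule inj_on_nth) auto
  show "\<forall>s<8. \<forall>t<8. cadj s t = cadj ([0,3,1,2,5,6,4,7::nat] ! s) ([0,3,1,2,5,6,4,7::nat] ! t)"
    unfolding all8 by (simp add: cadj_def)
  have h': "int n dvd -(int k^2 + int k + 1)" using h by (simp only: dvd_minus_iff)
  show "\<forall>s<8. \<forall>t<8. cadj s t \<longrightarrow> int n dvd (int k * V k s t + [0,0,-1,-1-int k,0,0,0,int k] ! t - [0,0,-1,-1-int k,0,0,0,int k] ! s - V k ([0,3,1,2,5,6,4,7::nat] ! s) ([0,3,1,2,5,6,4,7::nat] ! t))"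
    unfolding all8 using h h' by (simp add: cadj_def V_def vol_def algebra_simps power2_eq_square)
qed

definition TG :: "nat \<Rightarrow> nat list" where
  "TG t = [[0,1,2,3,4,5,6,7],[1,0,3,2,5,4,7,6],[2,3,0,1,6,7,4,5],[3,2,1,0,7,6,5,4],
     [4,5,6,7,0,1,2,3],[5,4,7,6,1,0,3,2],[6,7,4,5,2,3,0,1],[7,6,5,4,3,2,1,0]] ! t"

definition TR :: "nat \<Rightarrow> int" where "TR t = (if t < 4 then 1 else -1)"

definition TC :: "nat \<Rightarrow> nat \<Rightarrow> int list" where
  "TC k t = (let K = int k in [[0,0,0,0,0,0,0,0],[0,1,1,0,1,0,0,1],[0,1,K+1,K,K+1,K,0,1],[0,0,K,K,K,K,0,0],
     [0,0,0,0,0,0,0,0],[0,-1,-1,0,-1,0,0,-1],[0,-1,-K-1,-K,-K-1,-K,0,-1],[0,0,-K,-K,-K,-K,0,0]] ! t)"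

lemma vtx_aut_all: assumes n: "n \<ge> 1"
  shows "\<forall>t<8. is_graph_aut (8*n) (Gst n k) (lift n ((!) (TG t)) (TR t) (\<lambda>s. TC k t ! s + d))"
  unfolding all8
  by (intro conjI; rule lift_aut[OF n];
      simp add: all8 TG_def TR_def TC_def Let_def cadj_def V_def vol_def algebra_simps inj_on_nth)


lemma aut_comp: assumes a: "is_graph_aut m E f" and b: "is_graph_aut m E h" shows "is_graph_aut m E (f \<circ> h)"
proof -
  have bf: "bij_betw f {..<m} {..<m}" and bh: "bij_betw h {..<m} {..<m}" using a b unfolding is_graph_aut_def by auto
  have hm: "u < m \<Longrightarrow> h u < m" for u using bh unfolding bij_betw_def by auto
  have "E u v = E (f (h u)) (f (h v))" if "u < m" "v < m" for u v
    using a b hm that unfolding is_graph_aut_def by metis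
  thus ?thesis unfolding is_graph_aut_def using bij_betw_trans[OF bh bf] by auto
qed

lemma aut_into: "is_graph_aut m E f \<Longrightarrow> u < m \<Longrightarrow> f u < m"
  unfolding is_graph_aut_def bij_betw_def by auto

lemma aut_inv_ff: "is_graph_aut m E f \<Longrightarrow> u < m \<Longrightarrow> inv_into {..<m} f (f u) = u"
  unfolding is_graph_aut_def bij_betw_def by (auto intro: inv_into_f_f)

lemma aut_inv: assumes a: "is_graph_aut m E f" shows "is_graph_aut m E (inv_into {..<m} f)"
proof -
  have b: "bij_betw f {..<m} {..<m}" using a unfolding is_graph_aut_def by simp
  have bi: "bij_betw (inv_into {..<m} f) {..<m} {..<m}" using bij_betw_inv_into[OF b] .
  have "E u v = E (inv_into {..<m} f u) (inv_into {..<m} f v)" if u: "u < m" and v: "v < m" for u v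
  proof -
    have u': "inv_into {..<m} f u < m" "f (inv_into {..<m} f u) = u"
      using bi u b unfolding bij_betw_def by (auto intro: f_inv_into_f)
    have v': "inv_into {..<m} f v < m" "f (inv_into {..<m} f v) = v"
      using bi v b unfolding bij_betw_def by (auto intro: f_inv_into_f)
    show ?thesis using a u' v' unfolding is_graph_aut_def by metis
  qed
  thus ?thesis using bi unfolding is_graph_aut_def by auto
qed

context
  fixes n k :: nat
  assumes n: "n \<ge> 1" and h: "int n dvd int k^2 + int k + 1"
begin

abbreviation "rho \<equiv> lift n ((!) [0,3,1,2,5,6,4,7::nat]) (int k) ((!) [0,0,-1,-1-int k,0,0,0,int k])"

lemma vtx: assumes x: "x < 8*n" shows "\<exists>f. is_graph_aut (8*n) (Gst n k) f \<and> f 0 = x"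
proof -
  define t where "t = x div n"
  have t: "t < 8" unfolding t_def using x n by (simp add: less_mult_imp_div_less mult.commute)
  let ?f = "lift n ((!) (TG t)) (TR t) (\<lambda>s. TC k t ! s + int (x mod n))"
  have a: "is_graph_aut (8*n) (Gst n k) ?f" using vtx_aut_all[OF n] t by blast
  have tg: "\<forall>t<8. TG t ! 0 = t" unfolding all8 by (simp add: TG_def)
  have tc: "\<forall>t<8. TC k t ! 0 = 0" unfolding all8 by (simp add: TC_def Let_def)
  have "int (x mod n) mod int n = int (x mod n)" by (simp add: of_nat_mod[symmetric])
  hence "?f 0 = t * n + x mod n" unfolding lift_def using tg tc t by simp
  also have "\<dots> = x" unfolding t_def by simp
  finally show ?thesis using a by blast
qed

lemma nbr0: assumes w: "w < 8*n" and g: "Gst n k 0 w" shows "w = 4*n \<or> w = 5*n \<or> w = 6*n"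
proof -
  have c: "cadj 0 (w div n)" and d: "int n dvd (V k 0 (w div n) - int (w mod n))" using g n unfolding Gst_def by auto
  have V0: "V k 0 (w div n) = 0" unfolding V_def vol_def by simp
  have "int n dvd int (w mod n)" using d V0 by simp
  hence "int (w mod n) = 0" using dvd_small_eq[of "int (w mod n)" "int n" 0] n by auto
  hence "w mod n = 0" by simp
  moreover have "w div n = 4 \<or> w div n = 5 \<or> w div n = 6" using c unfolding cadj_def by auto
  moreover have "w = (w div n) * n + w mod n" by simp
  ultimately show ?thesis by auto
qed

lemma rho_aut': "is_graph_aut (8*n) (Gst n k) rho" by (rule rho_aut[OF n h])

lemma rho_vals: "rho 0 = 0" "rho (5*n) = 6*n" "rho (6*n) = 4*n"
  unfolding lift_def using n by auto

lemma to_base: assumes u: "u < 8*n" and v: "v < 8*n" and g: "Gst n k u v"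
  shows "\<exists>a. is_graph_aut (8*n) (Gst n k) a \<and> a u = 0 \<and> a v = 4*n"
proof -
  obtain f where f: "is_graph_aut (8*n) (Gst n k) f" "f 0 = u" using vtx[OF u] by blast
  let ?h = "inv_into {..<8*n} f"
  have ha: "is_graph_aut (8*n) (Gst n k) ?h" by (rule aut_inv[OF f(1)])
  have hu: "?h u = 0" using aut_inv_ff[OF f(1), of 0] f(2) n by simp
  have hv: "?h v < 8*n" by (rule aut_into[OF ha v])
  have "Gst n k (?h u) (?h v)" using ha u v g unfolding is_graph_aut_def by blast
  hence "Gst n k 0 (?h v)" using hu by simp
  from nbr0[OF hv this] show ?thesis
  proof (elim disjE)
    assume "?h v = 4*n" thus ?thesis using ha hu by blast
  next
    assume e: "?h v = 6*n"
    show ?thesis using aut_comp[OF rho_aut' ha] e hu rho_vals by (intro exI[of _ "rho \<circ> ?h"]) auto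
  next
    assume e: "?h v = 5*n"
    show ?thesis using aut_comp[OF rho_aut' aut_comp[OF rho_aut' ha]] e hu rho_vals
      by (intro exI[of _ "rho \<circ> (rho \<circ> ?h)"]) auto
  qed
qed

lemma Gst_arc_transitive: "arc_transitive (8*n) (Gst n k)"
  unfolding arc_transitive_def
proof (intro allI impI, elim conjE)
  fix u v x y assume u: "u < 8*n" and v: "v < 8*n" and x: "x < 8*n" and y: "y < 8*n"
    and e1: "Gst n k u v" and e2: "Gst n k x y"
  obtain a1 where a1: "is_graph_aut (8*n) (Gst n k) a1" "a1 u = 0" "a1 v = 4*n" using to_base[OF u v e1] by blast
  obtain a2 where a2: "is_graph_aut (8*n) (Gst n k) a2" "a2 x = 0" "a2 y = 4*n" using to_base[OF x y e2] by blast
  let ?f = "inv_into {..<8*n} a2 \<circ> a1"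
  have "is_graph_aut (8*n) (Gst n k) ?f" by (rule aut_comp[OF aut_inv[OF a2(1)] a1(1)])
  moreover have "?f u = x" using a1(2) aut_inv_ff[OF a2(1) x] a2(2) by simp
  moreover have "?f v = y" using a1(3) aut_inv_ff[OF a2(1) y] a2(3) by simp
  ultimately show "\<exists>f. is_graph_aut (8*n) (Gst n k) f \<and> f u = x \<and> f v = y" by blast
qed

end


lemma mod_eq_dvd_nat_int: assumes "(a::nat) < n" shows "((b + v) mod n = a) = (int n dvd (int b + int v - int a))"
proof -
  have "((b + v) mod n = a) = ((b + v) mod n = a mod n)" using assms by simp
  also have "\<dots> = (int ((b + v) mod n) = int (a mod n))" by linarith
  also have "\<dots> = ((int b + int v) mod int n = int a mod int n)" by (simp add: of_nat_mod)
  also have "\<dots> = (int n dvd (int b + int v - int a))" by (rule mod_eq_dvd_iff)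
  finally show ?thesis .
qed

lemma arc_transitive_transport:
  assumes at: "arc_transitive m G" and b: "bij_betw \<Phi> {..<m} {..<m}"
    and e: "\<And>u w. u < m \<Longrightarrow> w < m \<Longrightarrow> E u w = G (\<Phi> u) (\<Phi> w)"
  shows "arc_transitive m E"
  unfolding arc_transitive_def
proof (intro allI impI, elim conjE)
  fix u v x y assume u: "u < m" and v: "v < m" and x: "x < m" and y: "y < m" and e1: "E u v" and e2: "E x y"
  have pm: "z < m \<Longrightarrow> \<Phi> z < m" for z using b unfolding bij_betw_def by auto
  obtain f where f: "is_graph_aut m G f" "f (\<Phi> u) = \<Phi> x" "f (\<Phi> v) = \<Phi> y"
    using at pm[OF u] pm[OF v] pm[OF x] pm[OF y] e[OF u v] e[OF x y] e1 e2 unfolding arc_transitive_def by blast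
  let ?P = "inv_into {..<m} \<Phi>"
  have bP: "bij_betw ?P {..<m} {..<m}" by (rule bij_betw_inv_into[OF b])
  have PP: "z < m \<Longrightarrow> ?P (\<Phi> z) = z" for z using b unfolding bij_betw_def by (auto intro: inv_into_f_f)
  have PhP: "z < m \<Longrightarrow> \<Phi> (?P z) = z" for z using b unfolding bij_betw_def by (auto intro: f_inv_into_f)
  have Pm: "z < m \<Longrightarrow> ?P z < m" for z using bP unfolding bij_betw_def by auto
  have fb: "bij_betw f {..<m} {..<m}" using f(1) unfolding is_graph_aut_def by simp
  have fm: "z < m \<Longrightarrow> f z < m" for z using fb unfolding bij_betw_def by auto
  let ?g = "?P \<circ> f \<circ> \<Phi>"
  have gb: "bij_betw ?g {..<m} {..<m}" by (rule bij_betw_trans[OF b bij_betw_trans[OF fb bP]])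
  have "E a c = E (?g a) (?g c)" if a: "a < m" and c: "c < m" for a c
  proof -
    have "E a c = G (\<Phi> a) (\<Phi> c)" by (rule e[OF a c])
    also have "\<dots> = G (f (\<Phi> a)) (f (\<Phi> c))" using f(1) pm[OF a] pm[OF c] unfolding is_graph_aut_def by blast
    also have "\<dots> = G (\<Phi> (?g a)) (\<Phi> (?g c))" using PhP fm pm a c by simp
    also have "\<dots> = E (?g a) (?g c)" using e Pm fm pm a c by simp
    finally show ?thesis .
  qed
  hence "is_graph_aut m E ?g" using gb unfolding is_graph_aut_def by auto
  moreover have "?g u = x" "?g v = y" using f PP x y by auto
  ultimately show "\<exists>f. is_graph_aut m E f \<and> f u = x \<and> f v = y" by blast
qed

context cyc begin

definition Phi :: "nat \<Rightarrow> nat" where "Phi u = (u div n) * n + phi (u mod n)"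

lemma Phi_divmod: "Phi u div n = u div n" "Phi u mod n = phi (u mod n)"
  unfolding Phi_def using phi_into[of "u mod n"] n1 by auto

lemma Phi_bij: "bij_betw Phi {..<8*n} {..<8*n}"
proof -
  have into: "Phi u < 8*n" if "u < 8*n" for u
  proof -
    have "u div n < 8" using that n1 by (simp add: less_mult_imp_div_less mult.commute)
    hence "(u div n) * n + phi (u mod n) < 8 * n" using blk_less[OF phi_into, of "u mod n" "u div n" 8] n1 by auto
    thus ?thesis unfolding Phi_def .
  qed
  have inj: "inj_on Phi {..<8*n}"
  proof (rule inj_onI)
    fix u w assume "u \<in> {..<8*n}" "w \<in> {..<8*n}" and e: "Phi u = Phi w"
    have "u div n = w div n" using Phi_divmod e by metis
    moreover have "phi (u mod n) = phi (w mod n)" using Phi_divmod e by metis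
    hence "u mod n = w mod n" using phi_bij n1 unfolding bij_betw_def by (auto dest: inj_onD)
    ultimately show "u = w" by (metis div_mult_mod_eq)
  qed
  show ?thesis unfolding bij_betw_def using inj endo_inj_surj[of "{..<8*n}" Phi] into by auto
qed

lemma graph_eq: assumes u: "u < 8*n" and w: "w < 8*n"
  shows "mat_graph (bip_adj n (N_mat n (perm_mat n \<sigma>) k)) u w = Gst n k (Phi u) (Phi w)"
proof -
  define s r t q where "s = u div n" "r = u mod n" "t = w div n" "q = w mod n"
  have s: "s < 8" and t: "t < 8" unfolding s_r_t_q_def using u w n1 by (simp_all add: less_mult_imp_div_less mult.commute)
  have r: "r < n" and q: "q < n" unfolding s_r_t_q_def using n1 by auto
  have uu: "u = s*n + r" and ww: "w = t*n + q" unfolding s_r_t_q_def by simp_all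
  have "mat_graph (bip_adj n (N_mat n (perm_mat n \<sigma>) k)) u w = Rel \<sigma> k s r t q"
    unfolding mat_graph_def uu ww by (simp add: A_index[OF into s t r q])
  also have "\<dots> = (cadj s t \<and> int n dvd (int (phi r) + V k s t - int (phi q)))"
  proof -
    have pr: "phi r < n" and pq: "phi q < n" using phi_into r q by auto
    have "Rel \<sigma> k s r t q = ((s < 4 \<and> 4 \<le> t \<and> t < 8 \<and> s + (t-4) \<noteq> 3 \<and> int n dvd (int (phi r) + int (vol k s (t-4)) - int (phi q))) \<or>
       (t < 4 \<and> 4 \<le> s \<and> s < 8 \<and> t + (s-4) \<noteq> 3 \<and> int n dvd (int (phi q) + int (vol k t (s-4)) - int (phi r))))"
      unfolding Rel_def pow_eq_iff[OF r q] pow_eq_iff[OF q r] mod_eq_dvd_nat_int[OF pq] mod_eq_dvd_nat_int[OF pr] ..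
    also have "\<dots> = (cadj s t \<and> int n dvd (int (phi r) + V k s t - int (phi q)))"
    proof -
      have "(int (phi r) - int (vol k t (s-4)) - int (phi q)) = - (int (phi q) + int (vol k t (s-4)) - int (phi r))" by simp
      hence "(int n dvd (int (phi q) + int (vol k t (s-4)) - int (phi r))) = (int n dvd (int (phi r) - int (vol k t (s-4)) - int (phi q)))"
        by (simp only: dvd_minus_iff)
      thus ?thesis unfolding cadj_def V_def by auto
    qed
    finally show ?thesis .
  qed
  also have "\<dots> = Gst n k (Phi u) (Phi w)" unfolding Gst_def Phi_divmod s_r_t_q_def ..
  finally show ?thesis .
qed

lemma arc_trans: assumes h: "int n dvd int k^2 + int k + 1"
  shows "arc_transitive (8*n) (mat_graph (bip_adj n (N_mat n (perm_mat n \<sigma>) k)))"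
  by (rule arc_transitive_transport[OF Gst_arc_transitive[OF n1 h] Phi_bij graph_eq])

end


lemma per_mult: assumes per: "\<And>j. g (j + int n) = g (j::int)" shows "g (j + int n * m) = g j"
proof (induct m rule: int_induct[where k=0])
  case base show ?case by simp
next
  case (step1 i) thus ?case using per[of "j + int n * i"] by (simp add: algebra_simps)
next
  case (step2 i) thus ?case using per[of "j + int n * (i - 1)"] by (simp add: algebra_simps)
qed

lemma per_mod: assumes per: "\<And>j. g (j + int n) = g (j::int)" shows "g j = g (j mod int n)"
proof -
  have "j = j mod int n + int n * (j div int n)" by simp
  hence "g j = g (j mod int n + int n * (j div int n))" by simp
  also have "\<dots> = g (j mod int n)" by (rule per_mult[of g n, OF per])
  finally show ?thesis .
qed

lemma per_dvd: assumes per: "\<And>j. g (j + int n) = g (j::int)" and d: "int n dvd a - b" shows "g a = g b"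
proof -
  obtain m where "a - b = int n * m" using d by (auto simp: dvd_def)
  hence "a = b + int n * m" by simp
  thus ?thesis using per_mult[of g n, OF per] by simp
qed

lemma step_const: assumes "\<And>j. g (j + 1) = g (j::int)" shows "g j = g 0"
proof (induct j rule: int_induct[where k=0])
  case (step1 i) thus ?case using assms[of i] by simp
next
  case (step2 i) thus ?case using assms[of "i - 1"] by simp
qed simp

lemma per_sum_shift: assumes per: "\<And>j. g (j + int n) = g (j::int)" and n: "n \<ge> 1"
  shows "(\<Sum>j\<in>{0..<int n}. g (j + e)) = (\<Sum>j\<in>{0..<int n}. (g j :: complex))"
proof -
  let ?h = "\<lambda>j. (j + e) mod int n"
  have "(\<Sum>j\<in>{0..<int n}. g (j + e)) = (\<Sum>j\<in>{0..<int n}. g (?h j))"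
    by (rule sum.cong) (auto intro: per_mod[of g n, OF per])
  also have "\<dots> = (\<Sum>j\<in>?h ` {0..<int n}. g j)"
  proof -
    have "inj_on ?h {0..<int n}"
    proof (rule inj_onI)
      fix a b assume a: "a \<in> {0..<int n}" and b: "b \<in> {0..<int n}" and e: "?h a = ?h b"
      hence "int n dvd (a + e) - (b + e)" by (simp add: mod_eq_dvd_iff)
      hence "int n dvd a - b" by simp
      thus "a = b" using a b dvd_small_eq[of a "int n" b] by auto
    qed
    thus ?thesis by (simp add: sum.reindex)
  qed
  also have "?h ` {0..<int n} = {0..<int n}"
  proof -
    have "?h ` {0..<int n} \<subseteq> {0..<int n}" using n by auto
    moreover have "card (?h ` {0..<int n}) = card {0..<int n}"
    proof (rule card_image, rule inj_onI)
      fix a b assume a: "a \<in> {0..<int n}" and b: "b \<in> {0..<int n}" and e: "?h a = ?h b"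
      hence "int n dvd (a + e) - (b + e)" by (simp add: mod_eq_dvd_iff)
      hence "int n dvd a - b" by simp
      thus "a = b" using a b dvd_small_eq[of a "int n" b] by auto
    qed
    ultimately show ?thesis by (intro card_subset_eq) auto
  qed
  finally show ?thesis .
qed

lemma zero_const:
  assumes per: "\<And>j. u (j + int n) = u (j::int)" and n: "n \<ge> 1"
    and g: "\<And>j. u j - u (j + e) = (c :: complex)"
  shows "c = 0"
proof -
  have "(\<Sum>j\<in>{0..<int n}. u j - u (j + e)) = 0"
    using per_sum_shift[of u n, OF per n, of e] by (simp add: sum_subtractf)
  hence "(\<Sum>j\<in>{0..<int n}. c) = 0" using g by simp
  hence "of_nat n * c = 0" by simp
  thus ?thesis using n by simp
qed

lemma step_transfer:
  assumes per: "\<And>j. g (j + int n) = g (j::int)" and d: "\<And>j. g (j + e) = g j"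
    and m: "int n dvd int m * e - 1"
  shows "g (j + 1) = g j"
proof -
  have "g (j + int i * e) = g j" for i
  proof (induct i)
    case (Suc i)
    have "g (j + int (Suc i) * e) = g ((j + int i * e) + e)" by (simp add: algebra_simps)
    also have "\<dots> = g (j + int i * e)" by (rule d)
    finally show ?case using Suc by simp
  qed simp
  moreover have "g (j + int m * e) = g (j + 1)" by (rule per_dvd[of g n, OF per]) (use m in simp)
  ultimately show ?thesis by simp
qed

lemma mult_l: assumes "l * l = (1::complex)" "l * x = y" shows "x = l * y"
proof -
  have "x = (l * l) * x" using assms(1) by simp
  also have "\<dots> = l * y" using assms(2) by (simp add: mult.assoc)
  finally show ?thesis .
qed

lemma peel:
  fixes Y :: "int \<Rightarrow> complex" and k n :: nat
  defines "K \<equiv> int k"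
  assumes per: "\<And>j. Y (j + int n) = Y j" and n: "n \<ge> 1" and h: "int n dvd int k^2 + int k + 1"
    and Z: "\<And>j. - Y (j - 1 - K) + Y (j - 1) + Y (j - K) - Y (j + K) - Y (j + 1) + Y (j + 1 + K) = 0"
  shows "Y j = Y 0"
proof -
  define u2 where "u2 j = Y j - Y (j - 1 - K)" for j
  define u1 where "u1 j = u2 j - u2 (j + K)" for j
  have per2: "u2 (j + int n) = u2 j" for j unfolding u2_def using per[of j] per[of "j - 1 - K"] by (simp add: algebra_simps)
  have per1: "u1 (j + int n) = u1 j" for j unfolding u1_def using per2[of j] per2[of "j + K"] by (simp add: algebra_simps)
  have s1: "u1 (j + 1) = u1 j" for j using Z[of j] unfolding u1_def u2_def by (simp add: algebra_simps)
  have c1: "u1 j = u1 0" for j by (rule step_const[of u1, OF s1])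
  have "u2 j - u2 (j + K) = u1 0" for j using c1[of j] unfolding u1_def .
  hence z1: "u1 0 = 0" by (rule zero_const[of u2 n, OF per2 n])
  have d2: "u2 (j + K) = u2 j" for j using c1[of j] z1 unfolding u1_def by simp
  have m1: "int n dvd int (k^2) * K - 1"
  proof -
    have "int (k^2) * K - 1 = (int k - 1) * (int k^2 + int k + 1)" unfolding K_def by (simp add: algebra_simps power2_eq_square power3_eq_cube)
    thus ?thesis using h by simp
  qed
  have s2: "u2 (j + 1) = u2 j" for j by (rule step_transfer[of u2 n, OF per2 d2 m1])
  have c2: "u2 j = u2 0" for j by (rule step_const[of u2, OF s2])
  have "Y j - Y (j + (- 1 - K)) = u2 0" for j using c2[of j] unfolding u2_def by (simp add: algebra_simps)
  hence z2: "u2 0 = 0" by (rule zero_const[of Y n, OF per n])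
  have d3: "Y (j + (- 1 - K)) = Y j" for j using c2[of j] z2 unfolding u2_def by (simp add: algebra_simps)
  have m2: "int n dvd int k * (- 1 - K) - 1"
  proof -
    have e: "int k * (- 1 - K) - 1 = - (int k^2 + int k + 1)" unfolding K_def by (simp add: algebra_simps power2_eq_square)
    show ?thesis unfolding e using h by (simp only: dvd_minus_iff)
  qed
  have s3: "Y (j + 1) = Y j" for j by (rule step_transfer[of Y n, OF per d3 m2])
  show ?thesis by (rule step_const[of Y, OF s3])
qed

lemma eig_const:
  fixes F :: "nat \<Rightarrow> int \<Rightarrow> complex" and n k :: nat and l :: complex
  defines "K \<equiv> int k"
  assumes n: "n \<ge> 1" and h: "int n dvd int k^2 + int k + 1" and l: "l * l = 1"
    and per: "\<And>s j. F s (j + int n) = F s j"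
    and e0: "\<And>j. l * F 0 j = F 4 j + F 5 j + F 6 j"
    and e1: "\<And>j. l * F 1 j = F 4 j + F 5 (j + 1) + F 7 j"
    and e2: "\<And>j. l * F 2 j = F 4 j + F 6 (j + 1 + K) + F 7 (j + K)"
    and e3: "\<And>j. l * F 3 j = F 5 j + F 6 (j + K) + F 7 (j + K)"
    and e4: "\<And>j. l * F 4 j = F 0 j + F 1 j + F 2 j"
    and e5: "\<And>j. l * F 5 j = F 0 j + F 1 (j - 1) + F 3 j"
    and e6: "\<And>j. l * F 6 j = F 0 j + F 2 (j - 1 - K) + F 3 (j - K)"
    and e7: "\<And>j. l * F 7 j = F 1 j + F 2 (j - K) + F 3 (j - K)"
  shows "\<And>s j. s < 8 \<Longrightarrow> F s j = F s 0"
proof -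
  have l2: "l = 1 \<or> l = -1"
  proof -
    have "(l - 1) * (l + 1) = 0" using l by (simp add: algebra_simps)
    thus ?thesis by (auto simp: eq_neg_iff_add_eq_0)
  qed
  note f0 = mult_l[OF l e0] and f1 = mult_l[OF l e1] and f2 = mult_l[OF l e2] and f3 = mult_l[OF l e3]
  note f4 = mult_l[OF l e4] and f5 = mult_l[OF l e5] and f6 = mult_l[OF l e6] and f7 = mult_l[OF l e7]
  define R0 where "R0 = (\<lambda>j::int. F 4 (j) + F 5 (j) + F 6 (j) + F 4 (j) + F 5 (j + 1) + F 7 (j) + F 4 (j) + F 6 (j + 1 + K) + F 7 (j + K))"
  define R1 where "R1 = (\<lambda>j::int. F 4 (j) + F 5 (j) + F 6 (j) + F 4 (j - 1) + F 5 (j) + F 7 (j - 1) + F 5 (j) + F 6 (j + K) + F 7 (j + K))"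
  define R2 where "R2 = (\<lambda>j::int. F 4 (j) + F 5 (j) + F 6 (j) + F 4 (j - 1 - K) + F 6 (j) + F 7 (j - 1) + F 5 (j - K) + F 6 (j) + F 7 (j))"
  define R3 where "R3 = (\<lambda>j::int. F 4 (j) + F 5 (j + 1) + F 7 (j) + F 4 (j - K) + F 6 (j + 1) + F 7 (j) + F 5 (j - K) + F 6 (j) + F 7 (j))"
  have C0: "\<And>j. - F 4 (j - 1 - K) + F 4 (j - 1) + F 4 (j - K) - F 4 (j + K) - F 4 (j + 1) + F 4 (j + 1 + K) = (R1 (j) - F 5 (j)) - (R1 (j + 1) - F 5 (j + 1)) - (R2 (j) - F 6 (j)) + (R2 (j + 1 + K) - F 6 (j + 1 + K)) + (R3 (j) - F 7 (j)) - (R3 (j + K) - F 7 (j + K))"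
    unfolding R0_def R1_def R2_def R3_def by (simp add: algebra_simps)
  have C1: "\<And>j. - F 5 (j - 1 - K) + F 5 (j - 1) + F 5 (j - K) - F 5 (j + K) - F 5 (j + 1) + F 5 (j + 1 + K) = (R0 (j - 1) - F 4 (j - 1)) - (R0 (j) - F 4 (j)) + (R2 (j) - F 6 (j)) - (R2 (j + K) - F 6 (j + K)) - (R3 (j - 1) - F 7 (j - 1)) + (R3 (j + K) - F 7 (j + K))"
    unfolding R0_def R1_def R2_def R3_def by (simp add: algebra_simps)
  have C2: "\<And>j. - F 6 (j - 1 - K) + F 6 (j - 1) + F 6 (j - K) - F 6 (j + K) - F 6 (j + 1) + F 6 (j + 1 + K) = - (R0 (j - 1 - K) - F 4 (j - 1 - K)) + (R0 (j) - F 4 (j)) + (R1 (j - K) - F 5 (j - K)) - (R1 (j) - F 5 (j)) + (R3 (j - 1) - F 7 (j - 1)) - (R3 (j) - F 7 (j))"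
    unfolding R0_def R1_def R2_def R3_def by (simp add: algebra_simps)
  have C3: "\<And>j. - F 7 (j - 1 - K) + F 7 (j - 1) + F 7 (j - K) - F 7 (j + K) - F 7 (j + 1) + F 7 (j + 1 + K) = (R0 (j - K) - F 4 (j - K)) - (R0 (j) - F 4 (j)) - (R1 (j - K) - F 5 (j - K)) + (R1 (j + 1) - F 5 (j + 1)) + (R2 (j) - F 6 (j)) - (R2 (j + 1) - F 6 (j + 1))"
    unfolding R0_def R1_def R2_def R3_def by (simp add: algebra_simps)

  have H0: "\<And>j. F 4 j = R0 j"
  proof -
    fix j
    have "F 4 j = l * (F 0 j + F 1 j + F 2 j)" by (rule f4)
    also have "\<dots> = R0 j" using l2 unfolding R0_def by (elim disjE; simp only: f0 f1 f2; simp add: algebra_simps)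
    finally show "F 4 j = R0 j" .
  qed
  have H1: "\<And>j. F 5 j = R1 j"
  proof -
    fix j
    have "F 5 j = l * (F 0 j + F 1 (j - 1) + F 3 j)" by (rule f5)
    also have "\<dots> = R1 j" using l2 unfolding R1_def by (elim disjE; simp only: f0 f1 f3; simp add: algebra_simps)
    finally show "F 5 j = R1 j" .
  qed
  have H2: "\<And>j. F 6 j = R2 j"
  proof -
    fix j
    have "F 6 j = l * (F 0 j + F 2 (j - 1 - K) + F 3 (j - K))" by (rule f6)
    also have "\<dots> = R2 j" using l2 unfolding R2_def by (elim disjE; simp only: f0 f2 f3; simp add: algebra_simps)
    finally show "F 6 j = R2 j" .
  qed
  have H3: "\<And>j. F 7 j = R3 j"
  proof -
    fix j
    have "F 7 j = l * (F 1 j + F 2 (j - K) + F 3 (j - K))" by (rule f7)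
    also have "\<dots> = R3 j" using l2 unfolding R3_def by (elim disjE; simp only: f1 f2 f3; simp add: algebra_simps)
    finally show "F 7 j = R3 j" .
  qed
  note Hs = H0[symmetric] H1[symmetric] H2[symmetric] H3[symmetric]
  have Z0: "\<And>j. - F 4 (j - 1 - K) + F 4 (j - 1) + F 4 (j - K) - F 4 (j + K) - F 4 (j + 1) + F 4 (j + 1 + K) = 0"
    unfolding C0 Hs by simp
  have Z1: "\<And>j. - F 5 (j - 1 - K) + F 5 (j - 1) + F 5 (j - K) - F 5 (j + K) - F 5 (j + 1) + F 5 (j + 1 + K) = 0"
    unfolding C1 Hs by simp
  have Z2: "\<And>j. - F 6 (j - 1 - K) + F 6 (j - 1) + F 6 (j - K) - F 6 (j + K) - F 6 (j + 1) + F 6 (j + 1 + K) = 0"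
    unfolding C2 Hs by simp
  have Z3: "\<And>j. - F 7 (j - 1 - K) + F 7 (j - 1) + F 7 (j - K) - F 7 (j + K) - F 7 (j + 1) + F 7 (j + 1 + K) = 0"
    unfolding C3 Hs by simp
  have Y4: "\<And>j. F 4 j = F 4 0" by (rule peel[of "F 4" n k, OF per n h Z0[unfolded K_def]])
  have Y5: "\<And>j. F 5 j = F 5 0" by (rule peel[of "F 5" n k, OF per n h Z1[unfolded K_def]])
  have Y6: "\<And>j. F 6 j = F 6 0" by (rule peel[of "F 6" n k, OF per n h Z2[unfolded K_def]])
  have Y7: "\<And>j. F 7 j = F 7 0" by (rule peel[of "F 7" n k, OF per n h Z3[unfolded K_def]])
  have X0: "\<And>j. F 0 j = F 0 0" using f0 Y4 Y5 Y6 by metis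
  have X1: "\<And>j. F 1 j = F 1 0" using f1 Y4 Y5 Y7 by metis
  have X2: "\<And>j. F 2 j = F 2 0" using f2 Y4 Y6 Y7 by metis
  have X3: "\<And>j. F 3 j = F 3 0" using f3 Y5 Y6 Y7 by metis
  fix s :: nat and j assume "s < 8"
  hence "s = 0 \<or> s = 1 \<or> s = 2 \<or> s = 3 \<or> s = 4 \<or> s = 5 \<or> s = 6 \<or> s = 7" by auto
  thus "F s j = F s 0" using X0 X1 X2 X3 Y4 Y5 Y6 Y7 by auto
qed


lemma sum_blocks: "(\<Sum>z<(m::nat)*n. f z) = (\<Sum>t<m. \<Sum>q<n. f (t*n + q))"
proof -
  have "(\<Sum>z<m*n. f z) = (\<Sum>t<m. sum f {t*n..<t*n+n})" using sum.nat_group[of f n m] by simp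
  also have "\<dots> = (\<Sum>t<m. \<Sum>q<n. f (t*n + q))"
  proof (rule sum.cong[OF refl])
    fix t
    have "sum f {t*n..<t*n+n} = sum f {0 + t*n..<n + t*n}" by (simp add: add.commute)
    also have "\<dots> = (\<Sum>q = 0..<n. f (q + t*n))" by (rule sum.shift_bounds_nat_ivl)
    finally show "sum f {t*n..<t*n+n} = (\<Sum>q<n. f (t*n + q))" by (simp add: add.commute lessThan_atLeast0)
  qed
  finally show ?thesis .
qed

lemma sum8: "(\<Sum>t<(8::nat). f t) = f 0 + f 1 + f 2 + f 3 + f 4 + f 5 + f 6 + (f 7::'a::comm_monoid_add)"
proof -
  have "{..<(8::nat)} = {0,1,2,3,4,5,6,7}" by auto
  thus ?thesis by (simp add: add.assoc)
qed

locale eig = cyc +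
  fixes k :: nat
  assumes h: "int n dvd int k^2 + int k + 1"
begin

abbreviation "AA \<equiv> bip_adj n (N_mat n (perm_mat n \<sigma>) k)"
abbreviation "Ac \<equiv> map_mat complex_of_real AA"

lemma AA_carrier: "AA \<in> carrier_mat (8*n) (8*n)"
  unfolding carrier_mat_def bip_adj_def by simp

lemma Ac_carrier: "Ac \<in> carrier_mat (8*n) (8*n)" using AA_carrier by auto

definition Psi :: "nat \<Rightarrow> nat" where "Psi z = (z div n) * n + pi (z mod n)"

lemma Psi_divmod: "Psi z div n = z div n" "Psi z mod n = pi (z mod n)"
  unfolding Psi_def using pi_into[of "z mod n"] n1 by auto

lemma Phi_Psi: "Phi (Psi z) = z"
proof -
  have "phi (pi (z mod n)) = z mod n"
    using pi_bij n1 unfolding phi_def by (auto intro: the_inv_into_f_f simp: bij_betw_def)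
  thus ?thesis unfolding Phi_def Psi_divmod by simp
qed

lemma Psi_bij: "bij_betw Psi {..<8*n} {..<8*n}"
proof -
  have into: "Psi u < 8*n" if "u < 8*n" for u
  proof -
    have "u div n < 8" using that n1 by (simp add: less_mult_imp_div_less mult.commute)
    have pu: "pi (u mod n) < n" by (rule pi_into)
    show ?thesis unfolding Psi_def using blk_less[OF pu, of "u div n" 8] n1 \<open>u div n < 8\<close> by auto
  qed
  have inj: "inj_on Psi {..<8*n}" by (rule inj_on_inverseI[of _ Phi]) (rule Phi_Psi)
  show ?thesis unfolding bij_betw_def using inj endo_inj_surj[of "{..<8*n}" Psi] into by auto
qed

lemma Ac_index: assumes u: "u < 8*n" and w: "w < 8*n"
  shows "Ac $$ (u, w) = (if Gst n k (Phi u) (Phi w) then 1 else 0)"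
proof -
  define s r t q where "s = u div n" "r = u mod n" "t = w div n" "q = w mod n"
  have s: "s < 8" and t: "t < 8" unfolding s_r_t_q_def using u w n1 by (simp_all add: less_mult_imp_div_less mult.commute)
  have r: "r < n" and q: "q < n" unfolding s_r_t_q_def using n1 by auto
  have uu: "u = s*n + r" and ww: "w = t*n + q" unfolding s_r_t_q_def by simp_all
  have "AA $$ (u, w) = (if mat_graph AA u w then 1 else 0)"
    unfolding mat_graph_def uu ww by (simp add: A_index[OF into s t r q])
  thus ?thesis using u w AA_carrier graph_eq[OF u w] by auto
qed

lemma Ac_sym: assumes u: "u < 8*n" and w: "w < 8*n" shows "Ac $$ (u, w) = Ac $$ (w, u)"
proof -
  define s r t q where "s = u div n" "r = u mod n" "t = w div n" "q = w mod n"
  have s: "s < 8" and t: "t < 8" unfolding s_r_t_q_def using u w n1 by (simp_all add: less_mult_imp_div_less mult.commute)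
  have r: "r < n" and q: "q < n" unfolding s_r_t_q_def using n1 by auto
  have uu: "u = s*n + r" and ww: "w = t*n + q" unfolding s_r_t_q_def by simp_all
  have "Rel \<sigma> k s r t q = Rel \<sigma> k t q s r" unfolding Rel_def by auto
  hence "AA $$ (u, w) = AA $$ (w, u)" unfolding uu ww using A_index[OF into s t r q] A_index[OF into t s q r] by simp
  thus ?thesis using u w AA_carrier by auto
qed

lemma Ac_real: assumes u: "u < 8*n" and w: "w < 8*n" shows "cnj (Ac $$ (u, w)) = Ac $$ (u, w)"
  using u w AA_carrier by auto


lemma row_sum: assumes v: "v \<in> carrier_vec (8*n)" and s: "s < 8" and x: "x < n"
  shows "(Ac *\<^sub>v v) $ (s*n + pi x) = (\<Sum>t<8. if cadj s t then v $ (t*n + pi (nat ((int x + V k s t) mod int n))) else 0)"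
proof -
  let ?u = "s*n + pi x"
  have px: "pi x < n" by (rule pi_into)
  have u: "?u < 8*n" using blk_less[OF px, of s 8] s by auto
  have Phiu: "Phi ?u = s*n + x" unfolding Phi_def using pi_into[of x] n1 phi_into
    by (simp add: phi_def bij_betw_the_inv_into pi_bij the_inv_into_f_f[OF pi_inj] x)
  have "(Ac *\<^sub>v v) $ ?u = (\<Sum>w<8*n. Ac $$ (?u, w) * v $ w)"
    using u v Ac_carrier by (simp add: scalar_prod_def lessThan_atLeast0)
  also have "\<dots> = (\<Sum>w<8*n. if Gst n k (Phi ?u) (Phi w) then v $ w else 0)"
    by (rule sum.cong) (auto simp: Ac_index[OF u])
  also have "\<dots> = (\<Sum>z<8*n. if Gst n k (Phi ?u) z then v $ (Psi z) else 0)"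
    using sum.reindex_bij_betw[OF Psi_bij, of "\<lambda>w. if Gst n k (Phi ?u) (Phi w) then v $ w else 0"]
    by (simp add: Phi_Psi)
  also have "\<dots> = (\<Sum>t<8. \<Sum>q<n. if Gst n k (s*n + x) (t*n + q) then v $ (Psi (t*n+q)) else 0)"
    unfolding Phiu by (rule sum_blocks)
  also have "\<dots> = (\<Sum>t<8. if cadj s t then v $ (t*n + pi (nat ((int x + V k s t) mod int n))) else 0)"
  proof (rule sum.cong[OF refl])
    fix t assume t: "t \<in> {..<8::nat}"
    let ?q0 = "nat ((int x + V k s t) mod int n)"
    have q0: "?q0 < n" using n1 by (simp add: nat_less_iff)
    have iff: "(int n dvd (int x + V k s t - int q)) = (q = ?q0)" if q: "q < n" for q
    proof
      assume d: "int n dvd (int x + V k s t - int q)"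
      have "(int x + V k s t) mod int n = int q mod int n" using d by (simp add: mod_eq_dvd_iff)
      thus "q = ?q0" using q by simp
    next
      assume "q = ?q0"
      hence "int q = (int x + V k s t) mod int n" using n1 by simp
      thus "int n dvd (int x + V k s t - int q)" by (simp add: mod_eq_dvd_iff[symmetric])
    qed
    have G: "Gst n k (s*n + x) (t*n + q) = (cadj s t \<and> q = ?q0)" if q: "q < n" for q
      unfolding Gst_def using div_mod_blk[OF x] div_mod_blk[OF q] iff[OF q] by simp
    have "(\<Sum>q<n. if Gst n k (s*n + x) (t*n + q) then v $ (Psi (t*n+q)) else 0)
        = (\<Sum>q<n. if cadj s t \<and> q = ?q0 then v $ (Psi (t*n+q)) else 0)"
      by (rule sum.cong) (auto simp: G)
    also have "\<dots> = (if cadj s t then v $ (Psi (t*n + ?q0)) else 0)"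
      using q0 by (cases "cadj s t") (simp_all add: sum.delta)
    also have "Psi (t*n + ?q0) = t*n + pi ?q0" unfolding Psi_def using div_mod_blk[OF q0] by simp
    finally show "(\<Sum>q<n. if Gst n k (s*n + x) (t*n + q) then v $ (Psi (t*n+q)) else 0) =
       (if cadj s t then v $ (t*n + pi ?q0) else 0)" .
  qed
  finally show ?thesis .
qed

end


context eig begin

lemma B_mult: assumes v: "v \<in> carrier_vec (8*n)" and u: "u < 8*n"
  shows "(char_matrix Ac l *\<^sub>v v) $ u = (Ac *\<^sub>v v) $ u - l * v $ u"
proof -
  have "(char_matrix Ac l *\<^sub>v v) $ u = (\<Sum>w\<in>{0..<8*n}. (Ac $$ (u,w) - (if u = w then l else 0)) * v $ w)"
    using v u Ac_carrier unfolding char_matrix_def by (auto simp: scalar_prod_def intro!: sum.cong)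
  also have "\<dots> = (\<Sum>w\<in>{0..<8*n}. Ac $$ (u,w) * v $ w) - (\<Sum>w\<in>{0..<8*n}. (if u = w then l * v $ w else 0))"
  proof -
    have "\<And>w. (Ac $$ (u,w) - (if u = w then l else 0)) * v $ w = Ac $$ (u,w) * v $ w - (if u = w then l * v $ w else 0)"
      by (simp add: left_diff_distrib)
    thus ?thesis by (simp only: sum_subtractf)
  qed
  also have "\<dots> = (Ac *\<^sub>v v) $ u - l * v $ u"
    using v u Ac_carrier by (simp add: scalar_prod_def)
  finally show ?thesis .
qed

definition FF :: "complex vec \<Rightarrow> nat \<Rightarrow> int \<Rightarrow> complex" where
  "FF v s j = v $ (s*n + pi (nat (j mod int n)))"

lemma FF_per: "FF v s (j + int n) = FF v s j" unfolding FF_def by simp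

lemma eig_eq: assumes v: "v \<in> carrier_vec (8*n)" and ev: "\<And>u. u < 8*n \<Longrightarrow> (Ac *\<^sub>v v) $ u = l * v $ u"
  and s: "s < 8"
  shows "l * FF v s j = (\<Sum>t<8. if cadj s t then FF v t (j + V k s t) else 0)"
proof -
  define x where "x = nat (j mod int n)"
  have x: "x < n" unfolding x_def using n1 by (simp add: nat_less_iff)
  have ix: "int x = j mod int n" unfolding x_def using n1 by simp
  have px: "pi x < n" by (rule pi_into)
  have u: "s*n + pi x < 8*n" using blk_less[OF px, of s 8] s by auto
  have "l * FF v s j = (Ac *\<^sub>v v) $ (s*n + pi x)" unfolding FF_def x_def[symmetric] using ev[OF u] by simp
  also have "\<dots> = (\<Sum>t<8. if cadj s t then v $ (t*n + pi (nat ((int x + V k s t) mod int n))) else 0)"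
    by (rule row_sum[OF v s x])
  also have "\<dots> = (\<Sum>t<8. if cadj s t then FF v t (j + V k s t) else 0)"
    unfolding FF_def ix mod_add_left_eq ..
  finally show ?thesis .
qed

lemma kernel_const: assumes vk: "v \<in> mat_kernel (char_matrix Ac l)" and l: "l * l = 1"
  shows "\<And>s j. s < 8 \<Longrightarrow> FF v s j = FF v s 0"
proof -
  have cm: "char_matrix Ac l \<in> carrier_mat (8*n) (8*n)" using Ac_carrier unfolding char_matrix_def by auto
  have v: "v \<in> carrier_vec (8*n)" and z: "char_matrix Ac l *\<^sub>v v = 0\<^sub>v (8*n)" using mat_kernelD[OF cm vk] by auto
  have ev: "(Ac *\<^sub>v v) $ u = l * v $ u" if u: "u < 8*n" for u
  proof -
    have "(char_matrix Ac l *\<^sub>v v) $ u = 0" using z u by simp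
    thus ?thesis using B_mult[OF v u] by simp
  qed
  note E = eig_eq[OF v ev]
  let ?F = "FF v"
  have e: "\<And>s j. s < 8 \<Longrightarrow> l * ?F s j = (\<Sum>t<8. if cadj s t then ?F t (j + V k s t) else 0)" by (rule E)
  show "\<And>s j. s < 8 \<Longrightarrow> FF v s j = FF v s 0"
  proof (rule eig_const[of n k l ?F])
    show "n \<ge> 1" by (rule n1)
    show "int n dvd int k^2 + int k + 1" by (rule h)
    show "l * l = 1" by (rule l)
    show "\<And>s j. ?F s (j + int n) = ?F s j" by (rule FF_per)
    show "\<And>j. l * ?F 0 j = ?F 4 j + ?F 5 j + ?F 6 j" using e[of 0] by (simp add: sum8 cadj_def V_def vol_def)
    show "\<And>j. l * ?F 1 j = ?F 4 j + ?F 5 (j + 1) + ?F 7 j" using e[of 1] by (simp add: sum8 cadj_def V_def vol_def)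
    show "\<And>j. l * ?F 2 j = ?F 4 j + ?F 6 (j + 1 + int k) + ?F 7 (j + int k)" using e[of 2] by (simp add: sum8 cadj_def V_def vol_def add.assoc)
    show "\<And>j. l * ?F 3 j = ?F 5 j + ?F 6 (j + int k) + ?F 7 (j + int k)" using e[of 3] by (simp add: sum8 cadj_def V_def vol_def)
    show "\<And>j. l * ?F 4 j = ?F 0 j + ?F 1 j + ?F 2 j" using e[of 4] by (simp add: sum8 cadj_def V_def vol_def)
    show "\<And>j. l * ?F 5 j = ?F 0 j + ?F 1 (j - 1) + ?F 3 j" using e[of 5] by (simp add: sum8 cadj_def V_def vol_def)
    show "\<And>j. l * ?F 6 j = ?F 0 j + ?F 2 (j - 1 - int k) + ?F 3 (j - int k)" using e[of 6] by (simp add: sum8 cadj_def V_def vol_def algebra_simps)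
    show "\<And>j. l * ?F 7 j = ?F 1 j + ?F 2 (j - int k) + ?F 3 (j - int k)" using e[of 7] by (simp add: sum8 cadj_def V_def vol_def)
  qed
qed

end


lemma cube_solve:
  fixes c :: "nat \<Rightarrow> complex" and l :: complex
  assumes l: "l * l = 1"
    and e0: "l * c 0 = c 4 + c 5 + c 6" and e1: "l * c 1 = c 4 + c 5 + c 7"
    and e2: "l * c 2 = c 4 + c 6 + c 7" and e3: "l * c 3 = c 5 + c 6 + c 7"
    and e4: "l * c 4 = c 0 + c 1 + c 2" and e5: "l * c 5 = c 0 + c 1 + c 3"
    and e6: "l * c 6 = c 0 + c 2 + c 3" and e7: "l * c 7 = c 1 + c 2 + c 3"
  shows "c 4 + c 5 + c 6 + c 7 = 0" "c 0 = - l * c 7" "c 1 = - l * c 6" "c 2 = - l * c 5" "c 3 = - l * c 4"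
proof -
  define S where "S = c 4 + c 5 + c 6 + c 7"
  define T where "T = c 0 + c 1 + c 2 + c 3"
  have lT: "l * T = 3 * S" unfolding T_def S_def using e0 e1 e2 e3 by (simp add: algebra_simps)
  have lS: "l * S = 3 * T" unfolding T_def S_def using e4 e5 e6 e7 by (simp add: algebra_simps)
  have "S = l * (l * S)" using l by (simp add: mult.assoc[symmetric])
  also have "\<dots> = 3 * (l * T)" using lS by (simp add: algebra_simps)
  also have "\<dots> = 9 * S" using lT by simp
  finally have "8 * S = 0" by simp
  hence S0: "S = 0" by simp
  thus "c 4 + c 5 + c 6 + c 7 = 0" unfolding S_def .
  have "l * c 0 = - c 7" using e0 S0 unfolding S_def by (simp add: algebra_simps eq_neg_iff_add_eq_0)
  thus "c 0 = - l * c 7" using mult_l[OF l] by (metis mult_minus_left mult_minus_right)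
  have "l * c 1 = - c 6" using e1 S0 unfolding S_def by (simp add: algebra_simps eq_neg_iff_add_eq_0)
  thus "c 1 = - l * c 6" using mult_l[OF l] by (metis mult_minus_left mult_minus_right)
  have "l * c 2 = - c 5" using e2 S0 unfolding S_def by (simp add: algebra_simps eq_neg_iff_add_eq_0)
  thus "c 2 = - l * c 5" using mult_l[OF l] by (metis mult_minus_left mult_minus_right)
  have "l * c 3 = - c 4" using e3 S0 unfolding S_def by (simp add: algebra_simps eq_neg_iff_add_eq_0)
  thus "c 3 = - l * c 4" using mult_l[OF l] by (metis mult_minus_left mult_minus_right)
qed

context eig begin

lemma u_decomp: assumes u: "u < 8*n"
  shows "u = (u div n)*n + pi (phi (u mod n))" "phi (u mod n) < n" "u div n < 8"
proof -
  have r: "u mod n < n" using n1 by simp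
  show "u = (u div n)*n + pi (phi (u mod n))" using pi_phi[OF r] by simp
  show "phi (u mod n) < n" using phi_into[OF r] .
  show "u div n < 8" using u n1 by (simp add: less_mult_imp_div_less mult.commute)
qed

lemma cm_carrier: "char_matrix Ac l \<in> carrier_mat (8*n) (8*n)"
  using Ac_carrier unfolding char_matrix_def by auto

lemma kernel_vals: assumes vk: "v \<in> mat_kernel (char_matrix Ac l)" and l: "l * l = 1"
  shows "v \<in> carrier_vec (8*n)" "\<And>u. u < 8*n \<Longrightarrow> v $ u = FF v (u div n) 0"
    "FF v 4 0 + FF v 5 0 + FF v 6 0 + FF v 7 0 = 0"
    "FF v 0 0 = - l * FF v 7 0" "FF v 1 0 = - l * FF v 6 0" "FF v 2 0 = - l * FF v 5 0" "FF v 3 0 = - l * FF v 4 0"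
proof -
  have v: "v \<in> carrier_vec (8*n)" and z: "char_matrix Ac l *\<^sub>v v = 0\<^sub>v (8*n)" using mat_kernelD[OF cm_carrier vk] by auto
  thus "v \<in> carrier_vec (8*n)" by simp
  have ev: "(Ac *\<^sub>v v) $ u = l * v $ u" if u: "u < 8*n" for u
  proof -
    have "(char_matrix Ac l *\<^sub>v v) $ u = 0" using z u by simp
    thus ?thesis using B_mult[OF v u] by simp
  qed
  note kc = kernel_const[OF vk l]
  show "v $ u = FF v (u div n) 0" if u: "u < 8*n" for u
  proof -
    note d = u_decomp[OF u]
    have "v $ u = FF v (u div n) (int (phi (u mod n)))" unfolding FF_def using d(2) d(1)[symmetric] by simp
    also have "\<dots> = FF v (u div n) 0" using kc d(3) by blast
    finally show ?thesis .
  qed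
  let ?c = "\<lambda>s. FF v s 0"
  have e: "l * ?c s = (\<Sum>t<8. if cadj s t then ?c t else 0)" if s: "s < 8" for s
  proof -
    have "l * ?c s = (\<Sum>t<8. if cadj s t then FF v t (0 + V k s t) else 0)" by (rule eig_eq[OF v ev s])
    also have "\<dots> = (\<Sum>t<8. if cadj s t then ?c t else 0)"
    proof (rule sum.cong[OF refl])
      fix t assume "t \<in> {..<8::nat}"
      hence "FF v t (0 + V k s t) = FF v t 0" using kc[of t "0 + V k s t"] by simp
      thus "(if cadj s t then FF v t (0 + V k s t) else 0) = (if cadj s t then ?c t else 0)" by simp
    qed
    finally show ?thesis .
  qed
  have e0: "l * ?c 0 = ?c 4 + ?c 5 + ?c 6" using e[of 0] by (simp add: sum8 cadj_def)
  have e1: "l * ?c 1 = ?c 4 + ?c 5 + ?c 7" using e[of 1] by (simp add: sum8 cadj_def)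
  have e2: "l * ?c 2 = ?c 4 + ?c 6 + ?c 7" using e[of 2] by (simp add: sum8 cadj_def)
  have e3: "l * ?c 3 = ?c 5 + ?c 6 + ?c 7" using e[of 3] by (simp add: sum8 cadj_def)
  have e4: "l * ?c 4 = ?c 0 + ?c 1 + ?c 2" using e[of 4] by (simp add: sum8 cadj_def)
  have e5: "l * ?c 5 = ?c 0 + ?c 1 + ?c 3" using e[of 5] by (simp add: sum8 cadj_def)
  have e6: "l * ?c 6 = ?c 0 + ?c 2 + ?c 3" using e[of 6] by (simp add: sum8 cadj_def)
  have e7: "l * ?c 7 = ?c 1 + ?c 2 + ?c 3" using e[of 7] by (simp add: sum8 cadj_def)
  note cs = cube_solve[of l ?c, OF l e0 e1 e2 e3 e4 e5 e6 e7]
  show "FF v 4 0 + FF v 5 0 + FF v 6 0 + FF v 7 0 = 0"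
    "FF v 0 0 = - l * FF v 7 0" "FF v 1 0 = - l * FF v 6 0" "FF v 2 0 = - l * FF v 5 0" "FF v 3 0 = - l * FF v 4 0"
    using cs by auto
qed

end


definition cval :: "complex \<Rightarrow> (nat \<Rightarrow> complex) \<Rightarrow> nat \<Rightarrow> complex" where
  "cval l \<beta> t = (if 4 \<le> t then \<beta> t else - l * \<beta> (7 - t))"

lemma l_cases: "l * l = (1::complex) \<Longrightarrow> l = 1 \<or> l = -1"
proof -
  assume l: "l * l = 1"
  have "(l - 1) * (l + 1) = 0" using l by (simp add: algebra_simps)
  thus ?thesis by (auto simp: eq_neg_iff_add_eq_0)
qed

lemma cube_check: assumes l: "l * l = 1" and b: "\<beta> 4 + \<beta> 5 + \<beta> 6 + \<beta> 7 = 0" and s: "s < 8"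
  shows "(\<Sum>t<8. if cadj s t then cval l \<beta> t else 0) = l * cval l \<beta> s"
proof -
  have b7: "\<beta> 7 = - \<beta> 4 - \<beta> 5 - \<beta> 6" using b by (simp add: algebra_simps eq_neg_iff_add_eq_0)
  have "s = 0 \<or> s = 1 \<or> s = 2 \<or> s = 3 \<or> s = 4 \<or> s = 5 \<or> s = 6 \<or> s = 7" using s by auto
  moreover have "l = 1 \<or> l = -1" using l_cases[OF l] .
  ultimately show ?thesis
    by (elim disjE) (simp_all add: sum8 cadj_def cval_def b7 algebra_simps)
qed

context eig begin

definition cvec :: "complex \<Rightarrow> (nat \<Rightarrow> complex) \<Rightarrow> complex vec" where
  "cvec l \<beta> = vec (8*n) (\<lambda>u. cval l \<beta> (u div n))"

lemma cvec_carrier: "cvec l \<beta> \<in> carrier_vec (8*n)" unfolding cvec_def by simp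

lemma cvec_kernel: assumes l: "l * l = 1" and b: "\<beta> 4 + \<beta> 5 + \<beta> 6 + \<beta> 7 = 0"
  shows "cvec l \<beta> \<in> mat_kernel (char_matrix Ac l)"
proof (rule mat_kernelI[OF cm_carrier cvec_carrier])
  show "char_matrix Ac l *\<^sub>v cvec l \<beta> = 0\<^sub>v (8*n)"
  proof (rule eq_vecI)
    show "dim_vec (char_matrix Ac l *\<^sub>v cvec l \<beta>) = dim_vec (0\<^sub>v (8*n))" using cm_carrier[of l] by auto
    fix u assume "u < dim_vec (0\<^sub>v (8*n))"
    hence u: "u < 8*n" by simp
    note d = u_decomp[OF u]
    define s x where "s = u div n" "x = phi (u mod n)"
    have s: "s < 8" and x: "x < n" and uu: "u = s*n + pi x" using d unfolding s_x_def by auto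
    have "(Ac *\<^sub>v cvec l \<beta>) $ u = (\<Sum>t<8. if cadj s t then cvec l \<beta> $ (t*n + pi (nat ((int x + V k s t) mod int n))) else 0)"
      unfolding uu by (rule row_sum[OF cvec_carrier s x])
    also have "\<dots> = (\<Sum>t<8. if cadj s t then cval l \<beta> t else 0)"
    proof (rule sum.cong[OF refl])
      fix t assume t: "t \<in> {..<8::nat}"
      let ?q = "nat ((int x + V k s t) mod int n)"
      have q: "?q < n" using n1 by (simp add: nat_less_iff)
      have pq: "pi ?q < n" by (rule pi_into)
      have lt: "t*n + pi ?q < 8*n" using blk_less[OF pq, of t 8] t by auto
      have "cvec l \<beta> $ (t*n + pi ?q) = cval l \<beta> t" unfolding cvec_def using lt div_mod_blk[OF pq] by simp
      thus "(if cadj s t then cvec l \<beta> $ (t*n + pi ?q) else 0) = (if cadj s t then cval l \<beta> t else 0)" by simp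
    qed
    also have "\<dots> = l * cval l \<beta> s" by (rule cube_check[OF l b s])
    also have "\<dots> = l * cvec l \<beta> $ u" unfolding cvec_def s_x_def using u by simp
    finally have "(Ac *\<^sub>v cvec l \<beta>) $ u = l * cvec l \<beta> $ u" .
    thus "(char_matrix Ac l *\<^sub>v cvec l \<beta>) $ u = 0\<^sub>v (8*n) $ u" using B_mult[OF cvec_carrier u] u by simp
  qed
qed

lemma cm_dims[simp]: "dim_row (char_matrix Ac l) = 8*n" "dim_col (char_matrix Ac l) = 8*n"
  using cm_carrier[of l] by auto

lemma B_entry: assumes u: "u < 8*n" and w: "w < 8*n"
  shows "char_matrix Ac l $$ (u, w) = Ac $$ (u, w) - (if u = w then l else 0)"
  using u w Ac_carrier unfolding char_matrix_def by auto

lemma ker_im: assumes l: "l * l = 1" and vk: "v \<in> mat_kernel (char_matrix Ac l)"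
  and w: "w \<in> carrier_vec (8*n)" and vw: "v = char_matrix Ac l *\<^sub>v w"
  shows "v = 0\<^sub>v (8*n)"
proof -
  let ?B = "char_matrix Ac l"
  have lr: "cnj l = l" using l_cases[OF l] by auto
  have v: "v \<in> carrier_vec (8*n)" and z: "?B *\<^sub>v v = 0\<^sub>v (8*n)" using mat_kernelD[OF cm_carrier vk] by auto
  have Bsym: "cnj (?B $$ (u, w')) = ?B $$ (w', u)" if "u < 8*n" "w' < 8*n" for u w'
    using that B_entry Ac_sym Ac_real lr by auto
  let ?S = "{0..<8*n}"
  have vu: "v $ u = (\<Sum>w'\<in>?S. ?B $$ (u, w') * w $ w')" if "u < 8*n" for u
    using that vw w by (simp add: scalar_prod_def)
  have Bv: "(\<Sum>u\<in>?S. ?B $$ (w', u) * v $ u) = 0" if "w' < 8*n" for w'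
  proof -
    have "(?B *\<^sub>v v) $ w' = 0" using z that by simp
    thus ?thesis using that v by (simp add: scalar_prod_def)
  qed
  have "(\<Sum>u\<in>?S. cnj (v $ u) * v $ u) = (\<Sum>u\<in>?S. cnj (v $ u) * (\<Sum>w'\<in>?S. ?B $$ (u, w') * w $ w'))"
    by (rule sum.cong) (auto simp: vu)
  also have "\<dots> = (\<Sum>u\<in>?S. \<Sum>w'\<in>?S. w $ w' * (cnj (v $ u) * ?B $$ (u, w')))"
    by (simp add: sum_distrib_left mult_ac)
  also have "\<dots> = (\<Sum>w'\<in>?S. w $ w' * (\<Sum>u\<in>?S. cnj (v $ u) * ?B $$ (u, w')))"
    by (subst sum.swap) (simp add: sum_distrib_left)
  also have "\<dots> = (\<Sum>w'\<in>?S. w $ w' * cnj (\<Sum>u\<in>?S. ?B $$ (w', u) * v $ u))"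
  proof (rule sum.cong[OF refl])
    fix w' assume "w' \<in> ?S"
    hence w': "w' < 8*n" by simp
    have "(\<Sum>u\<in>?S. cnj (v $ u) * ?B $$ (u, w')) = (\<Sum>u\<in>?S. cnj (?B $$ (w', u) * v $ u))"
      by (rule sum.cong) (auto simp: Bsym[OF w', symmetric] mult.commute)
    thus "w $ w' * (\<Sum>u\<in>?S. cnj (v $ u) * ?B $$ (u, w')) = w $ w' * cnj (\<Sum>u\<in>?S. ?B $$ (w', u) * v $ u)"
      by (simp add: cnj_sum)
  qed
  also have "\<dots> = 0" using Bv by simp
  finally have s0: "(\<Sum>u\<in>?S. cnj (v $ u) * v $ u) = 0" .
  have "(\<Sum>u\<in>?S. cnj (v $ u) * v $ u) = (\<Sum>u\<in>?S. complex_of_real ((cmod (v $ u))^2))"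
    by (rule sum.cong[OF refl]) (simp only: complex_norm_square mult.commute)
  also have "\<dots> = complex_of_real (\<Sum>u\<in>?S. (cmod (v $ u))^2)" by (simp only: of_real_sum)
  finally have eqr: "(\<Sum>u\<in>?S. cnj (v $ u) * v $ u) = complex_of_real (\<Sum>u\<in>?S. (cmod (v $ u))^2)" .
  have "(\<Sum>u\<in>?S. (cmod (v $ u))^2) = 0" using s0 eqr by (metis of_real_eq_0_iff)
  hence "\<forall>u\<in>?S. (cmod (v $ u))^2 = 0" by (subst (asm) sum_nonneg_eq_0_iff) auto
  thus ?thesis using v by (intro eq_vecI) auto
qed

end


context eig begin

definition bvec :: "complex \<Rightarrow> nat \<Rightarrow> complex vec" where
  "bvec l i = cvec l (\<lambda>t. if t = 4 + i then 1 else if t = 7 then -1 else 0)"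

lemma bvec_kernel: "l * l = 1 \<Longrightarrow> i < 3 \<Longrightarrow> bvec l i \<in> mat_kernel (char_matrix Ac l)"
  unfolding bvec_def by (rule cvec_kernel) auto

lemma bvec_carrier: "bvec l i \<in> carrier_vec (8*n)" unfolding bvec_def by (rule cvec_carrier)

lemma bvec_index: assumes u: "u < 8*n"
  shows "bvec l i $ u = cval l (\<lambda>t. if t = 4 + i then 1 else if t = 7 then -1 else 0) (u div n)"
  unfolding bvec_def cvec_def using u by simp

lemma blk_index: "j < 8 \<Longrightarrow> j * n < 8 * n" "(j * n) div n = j"
  using n1 by auto

lemma bvec_at: assumes i: "i < 3" and j: "j < 3" shows "bvec l i $ ((4+j)*n) = (if i = j then 1 else 0)"
proof -
  have "(4+j) * n < 8*n" "((4+j)*n) div n = 4+j" using blk_index[of "4+j"] j by auto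
  thus ?thesis using i j by (simp add: bvec_index cval_def)
qed

lemma bvec_distinct: "bvec l 0 \<noteq> bvec l 1" "bvec l 0 \<noteq> bvec l 2" "bvec l 1 \<noteq> bvec l 2"
  using bvec_at[of 0 0 l] bvec_at[of 1 0 l] bvec_at[of 2 0 l] bvec_at[of 1 1 l] bvec_at[of 2 1 l] by auto

lemma kernel_decomp: assumes vk: "v \<in> mat_kernel (char_matrix Ac l)" and l: "l * l = 1" and u: "u < 8*n"
  shows "v $ u = FF v 4 0 * bvec l 0 $ u + FF v 5 0 * bvec l 1 $ u + FF v 6 0 * bvec l 2 $ u"
proof -
  note kv = kernel_vals[OF vk l]
  have f7: "FF v 7 0 = - FF v 4 0 - FF v 5 0 - FF v 6 0" using kv(3) by (simp add: algebra_simps eq_neg_iff_add_eq_0)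
  have s: "u div n < 8" using u_decomp[OF u] by simp
  hence "u div n = 0 \<or> u div n = 1 \<or> u div n = 2 \<or> u div n = 3 \<or> u div n = 4 \<or> u div n = 5 \<or> u div n = 6 \<or> u div n = 7" by auto
  thus ?thesis unfolding kv(2)[OF u] bvec_index[OF u]
    using kv(4-7) f7 by (elim disjE) (simp_all add: cval_def algebra_simps)
qed

lemma kernel_dim3: assumes l: "l * l = 1" shows "kernel_dim (char_matrix Ac l) = 3"
proof -
  let ?B = "char_matrix Ac l"
  interpret K: kernel "8*n" "8*n" ?B by (unfold_locales) (rule cm_carrier)
  let ?X = "{bvec l 0, bvec l 1, bvec l 2}"
  have Xk: "?X \<subseteq> mat_kernel ?B" using bvec_kernel[OF l] by auto
  have Xc: "?X \<subseteq> carrier_vec (8*n)" using bvec_carrier by auto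
  have cX: "card ?X = 3" using bvec_distinct by auto
  have fX: "finite ?X" by simp
  have li: "K.NC.lin_indpt ?X"
  proof (rule K.NC.finite_lin_indpt2[OF fX Xc])
    fix a assume z: "K.NC.lincomb a ?X = 0\<^sub>v (8*n)"
    have "a (bvec l j) = 0" if j: "j < 3" for j
    proof -
      have jn: "(4+j)*n < 8*n" using blk_index[of "4+j"] j by auto
      have "0 = K.NC.lincomb a ?X $ ((4+j)*n)" using z jn by simp
      also have "\<dots> = (\<Sum>x\<in>?X. a x * x $ ((4+j)*n))" by (rule K.NC.lincomb_index[OF jn Xc])
      also have "\<dots> = a (bvec l 0) * bvec l 0 $ ((4+j)*n) + a (bvec l 1) * bvec l 1 $ ((4+j)*n) + a (bvec l 2) * bvec l 2 $ ((4+j)*n)"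
        using bvec_distinct by simp
      also have "\<dots> = a (bvec l j)"
      proof -
        have "j = 0 \<or> j = 1 \<or> j = 2" using j by auto
        thus ?thesis using bvec_at[of 0 j l] bvec_at[of 1 j l] bvec_at[of 2 j l] j by auto
      qed
      finally show ?thesis by simp
    qed
    thus "\<forall>v\<in>?X. a v = 0" by auto
  qed
  have li': "K.Ker.lin_indpt ?X" using li K.lindep_same[OF Xk] by simp
  have sp: "K.span ?X = mat_kernel ?B"
  proof
    show "K.span ?X \<subseteq> mat_kernel ?B" using K.Ker.span_is_subset2[of ?X] Xk by simp
    show "mat_kernel ?B \<subseteq> K.span ?X"
    proof
      fix v assume vk: "v \<in> mat_kernel ?B"
      have v: "v \<in> carrier_vec (8*n)" using kernel_vals(1)[OF vk l] .
      define a where "a x = (if x = bvec l 0 then FF v 4 0 else if x = bvec l 1 then FF v 5 0 else FF v 6 0)" for x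
      have "v = K.NC.lincomb a ?X"
      proof (rule eq_vecI)
        show "dim_vec v = dim_vec (K.NC.lincomb a ?X)" using v K.NC.lincomb_dim[OF fX Xc] by simp
        fix u assume "u < dim_vec (K.NC.lincomb a ?X)"
        hence u: "u < 8*n" using K.NC.lincomb_dim[OF fX Xc] by simp
        have "K.NC.lincomb a ?X $ u = (\<Sum>x\<in>?X. a x * x $ u)" by (rule K.NC.lincomb_index[OF u Xc])
        also have "\<dots> = a (bvec l 0) * bvec l 0 $ u + a (bvec l 1) * bvec l 1 $ u + a (bvec l 2) * bvec l 2 $ u"
          using bvec_distinct by simp
        also have "\<dots> = v $ u"
        proof -
          have a0: "a (bvec l 0) = FF v 4 0" unfolding a_def by simp
          have a1: "a (bvec l 1) = FF v 5 0" unfolding a_def using bvec_distinct[of l] by auto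
          have a2: "a (bvec l 2) = FF v 6 0" unfolding a_def using bvec_distinct[of l] by auto
          show ?thesis unfolding a0 a1 a2 using kernel_decomp[OF vk l u] by simp
        qed
        finally show "v $ u = K.NC.lincomb a ?X $ u" by simp
      qed
      hence "v \<in> K.NC.span ?X" unfolding K.NC.finite_span[OF fX Xc] by auto
      thus "v \<in> K.span ?X" using K.span_same[OF Xk] by simp
    qed
  qed
  have "K.basis ?X" unfolding K.Ker.basis_def using li' sp Xk by simp
  hence "K.dim = card ?X" using K.Ker.dim_basis[OF fX] by simp
  thus ?thesis using cX by simp
qed

end



lemma order_of_real: fixes p :: "real poly" assumes p: "p \<noteq> 0"
  shows "order (complex_of_real a) (map_poly complex_of_real p) = order a p"
proof -
  interpret M: map_poly_inj_idom_hom complex_of_real by unfold_locales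
  obtain q where pq: "p = [:-a, 1:] ^ order a p * q" and nd: "\<not> [:-a, 1:] dvd q" using order_decomp[OF p] by blast
  have q0: "poly q a \<noteq> 0" using nd by (simp add: poly_eq_0_iff_dvd)
  have mq: "poly (map_poly complex_of_real q) (complex_of_real a) \<noteq> 0" using q0 by simp
  have lin: "map_poly complex_of_real [:-a, 1:] = [:- complex_of_real a, 1:]" by simp
  have mp: "map_poly complex_of_real p = [:- complex_of_real a, 1:] ^ order a p * map_poly complex_of_real q"
    by (subst pq) (simp only: M.hom_mult M.hom_power lin)
  have nz: "map_poly complex_of_real p \<noteq> 0" using p by simp
  have "order (complex_of_real a) (map_poly complex_of_real p) =
    order (complex_of_real a) ([:- complex_of_real a, 1:] ^ order a p) + order (complex_of_real a) (map_poly complex_of_real q)"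
    unfolding mp by (rule order_mult) (use nz mp in simp)
  also have "\<dots> = order a p" using mq by (simp add: order_power_n_n order_0I)
  finally show ?thesis .
qed

lemma min12: "0 \<notin> set ys \<Longrightarrow> sum_list (map (min (2::nat)) ys) = sum_list (map (min 1) ys) \<Longrightarrow>
  sum_list ys = sum_list (map (min 1) ys)"
proof (induct ys)
  case (Cons y ys)
  have le: "sum_list (map (min (1::nat)) ys) \<le> sum_list (map (min 2) ys)"
    by (induct ys) auto
  have y: "y \<noteq> 0" using Cons by auto
  from Cons.prems(2) le have "min 2 y \<le> min 1 y" by simp
  hence y1: "y = 1" using y by (cases "y \<ge> 2") auto
  hence "sum_list (map (min 2) ys) = sum_list (map (min 1) ys)" using Cons.prems(2) by simp
  hence "sum_list ys = sum_list (map (min 1) ys)" using Cons by auto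
  thus ?case using y1 by simp
qed simp

context eig begin

lemma kernel_dim_cong: assumes "mat_kernel M1 = mat_kernel M2" "dim_col M1 = dim_col M2"
  shows "kernel_dim M1 = kernel_dim M2"
  unfolding kernel_dim_def using assms by simp

lemma gen_eig: assumes l: "l * l = 1"
  shows "dim_gen_eigenspace Ac l 1 = 3" "dim_gen_eigenspace Ac l 2 = 3"
proof -
  let ?B = "char_matrix Ac l"
  have B: "?B \<in> carrier_mat (8*n) (8*n)" by (rule cm_carrier)
  have p1: "?B ^\<^sub>m 1 = ?B" using B by simp
  have p2: "?B ^\<^sub>m 2 = ?B * ?B" using B by (simp add: numeral_2_eq_2)
  have k2: "mat_kernel (?B * ?B) = mat_kernel ?B"
  proof
    show "mat_kernel ?B \<subseteq> mat_kernel (?B * ?B)"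
    proof
      fix v assume vk: "v \<in> mat_kernel ?B"
      have v: "v \<in> carrier_vec (8*n)" and z: "?B *\<^sub>v v = 0\<^sub>v (8*n)" using mat_kernelD[OF B vk] by auto
      have "(?B * ?B) *\<^sub>v v = ?B *\<^sub>v (?B *\<^sub>v v)" using B v by simp
      also have "\<dots> = ?B *\<^sub>v 0\<^sub>v (8*n)" using z by simp
      also have "\<dots> = 0\<^sub>v (8*n)" using B by (intro eq_vecI) (auto simp: scalar_prod_def)
      finally have "(?B * ?B) *\<^sub>v v = 0\<^sub>v (8*n)" .
      thus "v \<in> mat_kernel (?B * ?B)" using B v by (intro mat_kernelI[of _ "8*n" "8*n"]) auto
    qed
    show "mat_kernel (?B * ?B) \<subseteq> mat_kernel ?B"
    proof
      fix v assume vk: "v \<in> mat_kernel (?B * ?B)"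
      have BB: "?B * ?B \<in> carrier_mat (8*n) (8*n)" using B by simp
      have v: "v \<in> carrier_vec (8*n)" and z: "(?B * ?B) *\<^sub>v v = 0\<^sub>v (8*n)" using mat_kernelD[OF BB vk] by auto
      have w: "?B *\<^sub>v v \<in> carrier_vec (8*n)" using B v by simp
      have "?B *\<^sub>v (?B *\<^sub>v v) = 0\<^sub>v (8*n)" using z B v by simp
      hence wk: "?B *\<^sub>v v \<in> mat_kernel ?B" using B w by (intro mat_kernelI[of _ "8*n" "8*n"]) auto
      have "?B *\<^sub>v v = 0\<^sub>v (8*n)" by (rule ker_im[OF l wk v refl])
      thus "v \<in> mat_kernel ?B" using B v by (intro mat_kernelI[of _ "8*n" "8*n"]) auto
    qed
  qed
  show "dim_gen_eigenspace Ac l 1 = 3" unfolding dim_gen_eigenspace_def p1 by (rule kernel_dim3[OF l])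
  have "kernel_dim (?B * ?B) = kernel_dim ?B" by (rule kernel_dim_cong[OF k2]) (use B in simp)
  thus "dim_gen_eigenspace Ac l 2 = 3" unfolding dim_gen_eigenspace_def p2 using kernel_dim3[OF l] by simp
qed

lemma order_Ac: assumes l: "l * l = 1" shows "order l (char_poly Ac) = 3"
proof -
  obtain as where "char_poly Ac = (\<Prod>a\<leftarrow>as. [:- a, 1:])" using char_poly_factorized[OF Ac_carrier] by blast
  from jordan_nf_exists[OF Ac_carrier this] obtain n_as where jnf: "jordan_nf Ac n_as" by blast
  let ?ys = "map fst (filter (\<lambda>na. snd na = l) n_as)"
  have f: "[(m, e)\<leftarrow>n_as . e = l] = filter (\<lambda>na. snd na = l) n_as" by (induct n_as) auto
  have d1: "sum_list (map (min 1) ?ys) = 3" using dim_gen_eigenspace[OF jnf, of l 1] gen_eig(1)[OF l] f by simp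
  have d2: "sum_list (map (min 2) ?ys) = 3" using dim_gen_eigenspace[OF jnf, of l 2] gen_eig(2)[OF l] f by simp
  have z: "0 \<notin> set ?ys" using jnf unfolding jordan_nf_def by force
  have "sum_list ?ys = 3" using min12[OF z] d1 d2 by simp
  thus ?thesis using jordan_nf_order[OF jnf, of l] by simp
qed

lemma order_AA: assumes r: "r * r = (1::real)" shows "order r (char_poly AA) = 3"
proof -
  have cp: "char_poly Ac = map_poly complex_of_real (char_poly AA)" by (rule of_real_hom.char_poly_hom[OF AA_carrier])
  have nz: "char_poly AA \<noteq> 0" using degree_monic_char_poly[OF AA_carrier] by auto
  have l: "complex_of_real r * complex_of_real r = 1" using r by (metis of_real_1 of_real_mult)
  have "order r (char_poly AA) = order (complex_of_real r) (char_poly Ac)" unfolding cp by (rule order_of_real[OF nz, symmetric])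
  also have "\<dots> = 3" by (rule order_Ac[OF l])
  finally show ?thesis .
qed

end



theorem proposition6p1:
  fixes n k :: nat and \<sigma> :: "nat \<Rightarrow> nat"
  assumes "n \<ge> 1" and "k \<le> n - 1" and "n dvd k^2 + k + 1"
    and "is_ncycle n \<sigma>"
  defines "A \<equiv> bip_adj n (N_mat n (perm_mat n \<sigma>) k)"
  shows "arc_transitive (8*n) (mat_graph A)
    \<and> order 1 (char_poly A) = 3 \<and> order (-1) (char_poly A) = 3"
proof -
  have hi: "int n dvd int (k^2 + k + 1)" using assms(3) by (simp only: int_dvd_int_iff)
  hence h: "int n dvd int k^2 + int k + 1" by (simp only: of_nat_add of_nat_power of_nat_1)
  interpret E: eig n \<sigma> k
    by (unfold_locales) (use assms(1,4) h in auto)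
  have a: "arc_transitive (8*n) (mat_graph A)" unfolding A_def by (rule E.arc_trans[OF h])
  have o1: "order 1 (char_poly A) = 3" unfolding A_def by (rule E.order_AA) simp
  have o2: "order (-1) (char_poly A) = 3" unfolding A_def by (rule E.order_AA) simp
  show ?thesis using a o1 o2 by simp
qed

end
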